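(* Let $G$ be a finite simple 3-regular circle graph that is not isomorphic to $K_4$ or to $K_{3,3}$. Then $G$ is not 3-connected.
   Context: A double occurrence word is a finite sequence in which $n$ distinct letters appear, each exactly twice; its interlacement graph has the letters as vertices, with $a,b$ adjacent iff they appear in the order $abab$ or $baba$. A circle graph is a simple graph isomorphic to the interlacement graph of a double occurrence word. *)

theory Defs
  imports Main
begin

definition simple_graph :: "'a set \<Rightarrow> ('a \<Rightarrow> 'a \<Rightarrow> bool) \<Rightarrow> bool" where
  "simple_graph V E \<longleftrightarrow> finite V \<and> (\<forall>x y. E x y \<longrightarrow> x \<in> V \<and> y \<in> V)
     \<and> (\<forall>x y. E x y \<longrightarrow> E y x) \<and> (\<forall>x. \<not> E x x)"

definition graph_iso :: "'a set \<Rightarrow> ('a \<Rightarrow> 'a \<Rightarrow> bool) \<Rightarrow> 'b set \<Rightarrow> ('b \<Rightarrow> 'b \<Rightarrow> bool) \<Rightarrow> bool" where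
  "graph_iso V E V' E' \<longleftrightarrow> (\<exists>f. bij_betw f V V' \<and> (\<forall>x\<in>V. \<forall>y\<in>V. E x y \<longleftrightarrow> E' (f x) (f y)))"

definition degree :: "'a set \<Rightarrow> ('a \<Rightarrow> 'a \<Rightarrow> bool) \<Rightarrow> 'a \<Rightarrow> nat" where
  "degree V E v = card {u \<in> V. E v u}"

definition regular :: "nat \<Rightarrow> 'a set \<Rightarrow> ('a \<Rightarrow> 'a \<Rightarrow> bool) \<Rightarrow> bool" where
  "regular k V E \<longleftrightarrow> (\<forall>v\<in>V. degree V E v = k)"

definition K4_V :: "nat set" where "K4_V = {0..<4}"
definition K4_E :: "nat \<Rightarrow> nat \<Rightarrow> bool" where
  "K4_E x y \<longleftrightarrow> x \<in> K4_V \<and> y \<in> K4_V \<and> x \<noteq> y"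

definition K33_V :: "nat set" where "K33_V = {0..<6}"
definition K33_E :: "nat \<Rightarrow> nat \<Rightarrow> bool" where
  "K33_E x y \<longleftrightarrow> x \<in> K33_V \<and> y \<in> K33_V \<and> ((x < 3) \<noteq> (y < 3))"

definition connected_on :: "('a \<Rightarrow> 'a \<Rightarrow> bool) \<Rightarrow> 'a set \<Rightarrow> bool" where
  "connected_on E S \<longleftrightarrow> S \<noteq> {} \<and>
     (\<forall>x\<in>S. \<forall>y\<in>S. (\<lambda>u v. u \<in> S \<and> v \<in> S \<and> E u v)\<^sup>*\<^sup>* x y)"

definition k_connected :: "nat \<Rightarrow> 'a set \<Rightarrow> ('a \<Rightarrow> 'a \<Rightarrow> bool) \<Rightarrow> bool" where
  "k_connected k V E \<longleftrightarrow> card V > k \<and>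
     (\<forall>X. X \<subseteq> V \<and> card X < k \<longrightarrow> connected_on E (V - X))"

definition double_occurrence_word :: "'b list \<Rightarrow> bool" where
  "double_occurrence_word w \<longleftrightarrow> (\<forall>a\<in>set w. count_list w a = 2)"

definition interlaced :: "'b list \<Rightarrow> 'b \<Rightarrow> 'b \<Rightarrow> bool" where
  "interlaced w a b \<longleftrightarrow> a \<noteq> b \<and>
     (\<exists>i j k l. i < j \<and> j < k \<and> k < l \<and> l < length w \<and>
        ((w!i = a \<and> w!j = b \<and> w!k = a \<and> w!l = b) \<or>
         (w!i = b \<and> w!j = a \<and> w!k = b \<and> w!l = a)))"

definition circle_graph :: "'a set \<Rightarrow> ('a \<Rightarrow> 'a \<Rightarrow> bool) \<Rightarrow> bool" where
  "circle_graph V E \<longleftrightarrow> simple_graph V E \<and>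
     (\<exists>w :: nat list. double_occurrence_word w \<and> graph_iso V E (set w) (interlaced w))"

end

theory Submission imports Defs begin

locale dw =
  fixes w :: "nat list"
  assumes dow: "double_occurrence_word w" and ne: "w \<noteq> []"
begin

definition L :: int where "L = int (length w)"
definition W :: "int \<Rightarrow> nat" where "W p = w ! nat (p mod L)"
definition occ :: "int set \<Rightarrow> nat \<Rightarrow> nat" where "occ A b = card {e\<in>A. W e = b}"

lemma L_pos: "L > 0" using ne by (simp add: L_def)
lemma W_mod: "W (p mod L) = W p" by (simp add: W_def)
lemma W_per: "W (p + L * t) = W p" by (simp add: W_def)
lemma W_per': "W (p + t * L) = W p" by (simp add: W_def)
lemma W_perL: "W (p + L) = W p" using W_per[of p 1] by simp
lemma W_in: "W p \<in> set w"
proof -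
  have "nat (p mod L) < length w" using L_pos by (simp add: L_def nat_less_iff)
  thus ?thesis by (simp add: W_def)
qed

lemma count_card: assumes "b \<in> set w" shows "card {r\<in>{0..<L}. W r = b} = 2"
proof -
  have c: "count_list w b = 2" using dow assms by (simp add: double_occurrence_word_def)
  have "count_list w b = card {i. i < length w \<and> w ! i = b}"
    by (simp add: count_list_eq_length_filter length_filter_conv_card eq_commute)
  moreover have "{r\<in>{0..<L}. W r = b} = int ` {i. i < length w \<and> w ! i = b}"
  proof (rule set_eqI, rule iffI)
    fix r assume r: "r \<in> {r\<in>{0..<L}. W r = b}"
    hence "r = int (nat r)" "nat r < length w" "w ! nat r = b"
      by (auto simp: W_def L_def)
    thus "r \<in> int ` {i. i < length w \<and> w ! i = b}" by blast
  next
    fix r assume "r \<in> int ` {i. i < length w \<and> w ! i = b}"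
    then obtain i where "r = int i" "i < length w" "w ! i = b" by blast
    thus "r \<in> {r\<in>{0..<L}. W r = b}" by (auto simp: W_def L_def)
  qed
  moreover have "card (int ` {i. i < length w \<and> w ! i = b}) = card {i. i < length w \<and> w ! i = b}"
    by (simp add: card_image)
  ultimately show ?thesis using c by simp
qed

lemma mod_inj_window: "inj_on (\<lambda>e. e mod L) {lo..<lo+L}"
proof (rule inj_onI)
  fix x y assume x: "x \<in> {lo..<lo+L}" and y: "y \<in> {lo..<lo+L}" and e: "x mod L = y mod L"
  have "L dvd (x - y)" using e by (simp add: mod_eq_dvd_iff)
  then obtain k where k: "x - y = L * k" by (auto elim: dvdE)
  have "\<bar>x - y\<bar> < L" using x y by auto
  hence "L * \<bar>k\<bar> < L * 1" using k L_pos by (simp add: abs_mult)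
  hence "\<bar>k\<bar> < 1" using L_pos by (simp only: mult_less_cancel_left_pos)
  hence "k = 0" by simp
  thus "x = y" using k by simp
qed

lemma occ_window: assumes "b \<in> set w" shows "occ {lo..<lo+L} b = 2"
proof -
  have "(\<lambda>e. e mod L) ` {e\<in>{lo..<lo+L}. W e = b} = {r\<in>{0..<L}. W r = b}"
  proof
    show "(\<lambda>e. e mod L) ` {e\<in>{lo..<lo+L}. W e = b} \<subseteq> {r\<in>{0..<L}. W r = b}"
    proof
      fix r assume "r \<in> (\<lambda>e. e mod L) ` {e\<in>{lo..<lo+L}. W e = b}"
      then obtain e where "r = e mod L" "W e = b" by blast
      thus "r \<in> {r\<in>{0..<L}. W r = b}" using L_pos W_mod[of e] by simp
    qed
  next
    show "{r\<in>{0..<L}. W r = b} \<subseteq> (\<lambda>e. e mod L) ` {e\<in>{lo..<lo+L}. W e = b}"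
    proof
      fix r assume r: "r \<in> {r\<in>{0..<L}. W r = b}"
      define x where "x = lo + (r - lo) mod L"
      have "x mod L = (lo + (r - lo)) mod L" unfolding x_def by (rule mod_add_right_eq)
      also have "\<dots> = r" using r by simp
      finally have "x mod L = r" .
      moreover have "x \<in> {lo..<lo+L}" using L_pos pos_mod_sign[of L "r-lo"] pos_mod_bound[of L "r-lo"] unfolding x_def atLeastLessThan_iff by linarith
      moreover have "W x = b" using r \<open>x mod L = r\<close> W_mod[of x] by auto
      ultimately show "r \<in> (\<lambda>e. e mod L) ` {e\<in>{lo..<lo+L}. W e = b}"
        by (intro image_eqI[where x=x]) auto
    qed
  qed
  moreover have inj: "inj_on (\<lambda>e. e mod L) {e\<in>{lo..<lo+L}. W e = b}"
    by (rule inj_on_subset[OF mod_inj_window]) auto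
  ultimately have "card {e\<in>{lo..<lo+L}. W e = b} = card {r\<in>{0..<L}. W r = b}"
    using card_image[OF inj] by simp
  thus ?thesis using count_card[OF assms] unfolding occ_def by simp
qed


lemma fib: assumes "W x = b" "W y = b" "x \<noteq> y" "x \<in> {lo..<lo+L}" "y \<in> {lo..<lo+L}"
  shows "{e\<in>{lo..<lo+L}. W e = b} = {x,y}"
proof -
  have b: "b \<in> set w" using assms(1) W_in by blast
  have c: "card {e\<in>{lo..<lo+L}. W e = b} = 2" using occ_window[OF b] by (simp add: occ_def)
  have s: "{x,y} \<subseteq> {e\<in>{lo..<lo+L}. W e = b}" using assms by auto
  have "card {x,y} = 2" using assms(3) by simp
  moreover have fin: "finite {e\<in>{lo..<lo+L}. W e = b}" by (rule finite_subset[of _ "{lo..<lo+L}"]) auto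
  ultimately show ?thesis using card_subset_eq[OF fin s] c by simp
qed

lemma occ_le2: assumes "A \<subseteq> {lo..<lo+L}" shows "occ A b \<le> 2"
proof (cases "b \<in> set w")
  case True
  have fin: "finite {e\<in>{lo..<lo+L}. W e = b}" by (rule finite_subset[of _ "{lo..<lo+L}"]) auto
  have "card {e\<in>A. W e = b} \<le> card {e\<in>{lo..<lo+L}. W e = b}"
    by (rule card_mono[OF fin]) (use assms in auto)
  thus ?thesis using occ_window[OF True] by (simp add: occ_def)
next
  case False
  have e: "{e\<in>A. W e = b} = {}" using W_in False by auto
  show ?thesis unfolding occ_def e by simp
qed

lemma three: assumes "W x = W y" "W y = W z" "x \<noteq> y" "y \<noteq> z" "x \<noteq> z"
  "x \<in> {lo..<lo+L}" "y \<in> {lo..<lo+L}" "z \<in> {lo..<lo+L}" shows False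
proof -
  have "{e\<in>{lo..<lo+L}. W e = W y} = {x,y}" by (rule fib) (use assms in auto)
  moreover have "z \<in> {e\<in>{lo..<lo+L}. W e = W y}" using assms by auto
  ultimately show False using assms by auto
qed

lemma occ_sub: assumes "W x = b" "W y = b" "x \<noteq> y" "x \<in> {lo..<lo+L}" "y \<in> {lo..<lo+L}"
  "A \<subseteq> {lo..<lo+L}" shows "occ A b = card ({x,y} \<inter> A)"
proof -
  have "{e\<in>A. W e = b} = {e\<in>{lo..<lo+L}. W e = b} \<inter> A" using assms(6) by auto
  thus ?thesis using fib[OF assms(1-5)] by (simp add: occ_def Int_commute)
qed

lemma occ_Un: assumes "A \<inter> B = {}" "finite A" "finite B" shows "occ (A \<union> B) b = occ A b + occ B b"
proof -
  have "{e\<in>A \<union> B. W e = b} = {e\<in>A. W e = b} \<union> {e\<in>B. W e = b}" by auto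
  moreover have "card ({e\<in>A. W e = b} \<union> {e\<in>B. W e = b}) = card {e\<in>A. W e = b} + card {e\<in>B. W e = b}"
    by (rule card_Un_disjoint) (use assms in auto)
  ultimately show ?thesis by (simp add: occ_def)
qed

lemma partner: "\<exists>d. 0 < d \<and> d < L \<and> W (q + d) = W q"
proof -
  have b: "W q \<in> set w" by (rule W_in)
  have "occ {q..<q+L} (W q) = 2" by (rule occ_window[OF b])
  hence "card {e\<in>{q..<q+L}. W e = W q} = 2" by (simp add: occ_def)
  then obtain x y where xy: "x \<noteq> y" "{e\<in>{q..<q+L}. W e = W q} = {x,y}" by (auto simp: card_Suc_eq numeral_2_eq_2)
  have "q \<in> {e\<in>{q..<q+L}. W e = W q}" using L_pos by simp
  hence "\<exists>y'. y' \<noteq> q \<and> y' \<in> {e\<in>{q..<q+L}. W e = W q}" using xy by auto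
  then obtain y' where y': "y' \<noteq> q" "y' \<in> {q..<q+L}" "W y' = W q" by auto
  show ?thesis by (rule exI[of _ "y' - q"]) (use y' in auto)
qed

lemma card_sum_occ: assumes "finite A" shows "card A = (\<Sum>b\<in>set w. occ A b)"
proof -
  have "A = (\<Union>b\<in>set w. {e\<in>A. W e = b})" using W_in by auto
  hence "card A = card (\<Union>b\<in>set w. {e\<in>A. W e = b})" by simp
  also have "\<dots> = (\<Sum>b\<in>set w. card {e\<in>A. W e = b})"
    by (rule card_UN_disjoint) (use assms in auto)
  finally show ?thesis by (simp add: occ_def)
qed

lemma sum012: fixes f :: "'b \<Rightarrow> nat" assumes "finite S" "\<forall>b\<in>S. f b \<le> 2"
  shows "(\<Sum>b\<in>S. f b) = card {b\<in>S. f b = 1} + 2 * card {b\<in>S. f b = 2}"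
  using assms
proof (induction S rule: finite_induct)
  case empty thus ?case by simp
next
  case (insert x F)
  have e1: "{b\<in>insert x F. f b = 1} = (if f x = 1 then insert x {b\<in>F. f b = 1} else {b\<in>F. f b = 1})" by auto
  have e2: "{b\<in>insert x F. f b = 2} = (if f x = 2 then insert x {b\<in>F. f b = 2} else {b\<in>F. f b = 2})" by auto
  have "f x \<le> 2" using insert by auto
  hence "f x = 0 \<or> f x = 1 \<or> f x = 2" by auto
  thus ?case using insert e1 e2 by auto
qed

lemma count_arc: assumes "A \<subseteq> {lo..<lo+L}" "finite A"
  shows "card A = card {b\<in>set w. occ A b = 1} + 2 * card {b\<in>set w. occ A b = 2}"
  using card_sum_occ[OF assms(2)] sum012[of "set w" "occ A"] occ_le2[OF assms(1)] by simp


lemma W_nat: "n < length w \<Longrightarrow> W (int n) = w ! n"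
  by (simp add: W_def L_def)

lemma occ_shift: assumes "L dvd c" shows "occ {lo+c..<hi+c} b = occ {lo..<hi} b"
proof -
  obtain t where t: "c = L * t" using assms by (auto elim: dvdE)
  have "{e\<in>{lo+c..<hi+c}. W e = b} = (\<lambda>e. e + c) ` {e\<in>{lo..<hi}. W e = b}"
  proof
    show "{e\<in>{lo+c..<hi+c}. W e = b} \<subseteq> (\<lambda>e. e + c) ` {e\<in>{lo..<hi}. W e = b}"
    proof
      fix e assume e: "e \<in> {e\<in>{lo+c..<hi+c}. W e = b}"
      have "W (e - c) = b" using e W_per[of "e - c" t] t by simp
      hence "e - c \<in> {e\<in>{lo..<hi}. W e = b}" using e by auto
      thus "e \<in> (\<lambda>e. e + c) ` {e\<in>{lo..<hi}. W e = b}" by (intro image_eqI[where x="e - c"]) auto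
    qed
  next
    show "(\<lambda>e. e + c) ` {e\<in>{lo..<hi}. W e = b} \<subseteq> {e\<in>{lo+c..<hi+c}. W e = b}"
      using W_per t by auto
  qed
  moreover have inj: "inj_on (\<lambda>e. e + c) {e\<in>{lo..<hi}. W e = b}" by (rule inj_onI) simp
  ultimately show ?thesis unfolding occ_def using card_image[OF inj] by simp
qed

lemma W_nth: "0 \<le> x \<Longrightarrow> x < L \<Longrightarrow> W x = w ! nat x"
  by (simp add: W_def)

lemma interI: assumes "a \<noteq> b" "0 \<le> x1" "x1 < x2" "x2 < x3" "x3 < x4" "x4 < L"
  "W x1 = a" "W x2 = b" "W x3 = a" "W x4 = b"
  shows "interlaced w a b"
proof -
  have n: "nat x1 < nat x2" "nat x2 < nat x3" "nat x3 < nat x4" "nat x4 < length w"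
    using assms by (auto simp: L_def)
  have v: "w ! nat x1 = a" "w ! nat x2 = b" "w ! nat x3 = a" "w ! nat x4 = b"
    using assms W_nth[of x1] W_nth[of x2] W_nth[of x3] W_nth[of x4] by auto
  show ?thesis unfolding interlaced_def using assms(1) n v by blast
qed

lemma interI2: assumes "a \<noteq> b" "0 \<le> x1" "x1 < x2" "x2 < x3" "x3 < x4" "x4 < L"
  "W x1 = b" "W x2 = a" "W x3 = b" "W x4 = a"
  shows "interlaced w a b"
proof -
  have n: "nat x1 < nat x2" "nat x2 < nat x3" "nat x3 < nat x4" "nat x4 < length w"
    using assms by (auto simp: L_def)
  have v: "w ! nat x1 = b" "w ! nat x2 = a" "w ! nat x3 = b" "w ! nat x4 = a"
    using assms W_nth[of x1] W_nth[of x2] W_nth[of x3] W_nth[of x4] by auto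
  show ?thesis unfolding interlaced_def using assms(1) n v by blast
qed

lemma interE: assumes "interlaced w a b"
  obtains x1 x2 x3 x4 where "0 \<le> x1" "x1 < x2" "x2 < x3" "x3 < x4" "x4 < L"
    "(W x1 = a \<and> W x2 = b \<and> W x3 = a \<and> W x4 = b) \<or> (W x1 = b \<and> W x2 = a \<and> W x3 = b \<and> W x4 = a)"
proof -
  obtain i' j' k' l' where o: "i' < j'" "j' < k'" "k' < l'" "l' < length w" and
      pat: "(w!i' = a \<and> w!j' = b \<and> w!k' = a \<and> w!l' = b) \<or> (w!i' = b \<and> w!j' = a \<and> w!k' = b \<and> w!l' = a)"
    using assms unfolding interlaced_def by blast
  have Wi: "W (int i') = w!i'" "W (int j') = w!j'" "W (int k') = w!k'" "W (int l') = w!l'"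
    using o by (auto intro!: W_nat)
  have "int l' < L" using o by (simp add: L_def)
  thus ?thesis using that[of "int i'" "int j'" "int k'" "int l'"] o pat Wi by auto
qed

lemma linW: assumes ij: "0 \<le> i" "i < j" "j < L" and a: "W i = a" "W j = a" and b: "b \<in> set w" "b \<noteq> a"
  shows "interlaced w a b \<longleftrightarrow> occ {i+1..<j} b = 1"
proof -
  have fa: "{e\<in>{0..<0+L}. W e = a} = {i,j}" by (rule fib) (use ij a in auto)
  have "occ {0..<0+L} b = 2" by (rule occ_window[OF b(1)])
  hence "card {e\<in>{0..<0+L}. W e = b} = 2" by (simp add: occ_def)
  then obtain u v where uv: "u \<noteq> v" "{e\<in>{0..<0+L}. W e = b} = {u,v}"
    by (auto simp: card_Suc_eq numeral_2_eq_2)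
  have sub: "{i+1..<j} \<subseteq> {0..<0+L}" using ij by auto
  have uvin: "u \<in> {0..<0+L}" "v \<in> {0..<0+L}" "W u = b" "W v = b" using uv(2) by auto
  have ob: "occ {i+1..<j} b = card ({u,v} \<inter> {i+1..<j})"
    by (rule occ_sub[OF uvin(3,4) uv(1) uvin(1,2) sub])
  have uij: "u \<noteq> i" "u \<noteq> j" "v \<noteq> i" "v \<noteq> j" using uvin a b by auto
  show ?thesis
  proof
    assume "interlaced w a b"
    then obtain x1 x2 x3 x4 where o: "0 \<le> x1" "x1 < x2" "x2 < x3" "x3 < x4" "x4 < L" and
      pat: "(W x1 = a \<and> W x2 = b \<and> W x3 = a \<and> W x4 = b) \<or> (W x1 = b \<and> W x2 = a \<and> W x3 = b \<and> W x4 = a)"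
      by (rule interE)
    from pat show "occ {i+1..<j} b = 1"
    proof
      assume p: "W x1 = a \<and> W x2 = b \<and> W x3 = a \<and> W x4 = b"
      have "x1 \<in> {e\<in>{0..<0+L}. W e = a}" "x3 \<in> {e\<in>{0..<0+L}. W e = a}" using p o by auto
      hence "x1 \<in> {i,j}" "x3 \<in> {i,j}" using fa by blast+
      hence ik: "x1 = i" "x3 = j" using o ij by auto
      have "occ {i+1..<j} b = card ({x2, x4} \<inter> {i+1..<j})"
        by (rule occ_sub[OF _ _ _ _ _ sub]) (use p o in auto)
      also have "{x2, x4} \<inter> {i+1..<j} = {x2}" using ik o by auto
      finally show ?thesis by simp
    next
      assume p: "W x1 = b \<and> W x2 = a \<and> W x3 = b \<and> W x4 = a"
      have "x2 \<in> {e\<in>{0..<0+L}. W e = a}" "x4 \<in> {e\<in>{0..<0+L}. W e = a}" using p o by auto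
      hence "x2 \<in> {i,j}" "x4 \<in> {i,j}" using fa by blast+
      hence ik: "x2 = i" "x4 = j" using o ij by auto
      have "occ {i+1..<j} b = card ({x1, x3} \<inter> {i+1..<j})"
        by (rule occ_sub[OF _ _ _ _ _ sub]) (use p o in auto)
      also have "{x1, x3} \<inter> {i+1..<j} = {x3}" using ik o by auto
      finally show ?thesis by simp
    qed
  next
    assume "occ {i+1..<j} b = 1"
    hence c1: "card ({u,v} \<inter> {i+1..<j}) = 1" using ob by simp
    have ab: "a \<noteq> b" using b by simp
    have case1: "interlaced w a b" if t: "u \<in> {i+1..<j}" "v \<notin> {i+1..<j}" "W u = b" "W v = b"
      "v \<in> {0..<0+L}" "v \<noteq> i" "v \<noteq> j" for u v
    proof (cases "v < i")
      case True
      show ?thesis by (rule interI2[of a b v i u j]) (use t True ij a ab in auto)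
    next
      case False
      hence "v > j" using t by auto
      show ?thesis by (rule interI[of a b i u j v]) (use t \<open>v > j\<close> ij a ab in auto)
    qed
    have "(u \<in> {i+1..<j} \<and> v \<notin> {i+1..<j}) \<or> (v \<in> {i+1..<j} \<and> u \<notin> {i+1..<j})"
      using c1 uv(1) by (cases "u \<in> {i+1..<j}"; cases "v \<in> {i+1..<j}") auto
    thus "interlaced w a b"
    proof
      assume "u \<in> {i+1..<j} \<and> v \<notin> {i+1..<j}"
      thus ?thesis using case1[of u v] uvin uij by blast
    next
      assume "v \<in> {i+1..<j} \<and> u \<notin> {i+1..<j}"
      thus ?thesis using case1[of v u] uvin uij by blast
    qed
  qed
qed


lemma occ_split: assumes "lo \<le> m" "m \<le> hi" shows "occ {lo..<hi} b = occ {lo..<m} b + occ {m..<hi} b"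
proof -
  have "{lo..<hi} = {lo..<m} \<union> {m..<hi}" using assms by auto
  thus ?thesis using occ_Un[of "{lo..<m}" "{m..<hi}" b] by auto
qed

lemma occ_single0: "W x \<noteq> b \<Longrightarrow> occ {x..<x+1} b = 0"
proof -
  assume "W x \<noteq> b"
  hence "{e\<in>{x..<x+1}. W e = b} = {}" by auto
  thus "occ {x..<x+1} b = 0" unfolding occ_def by (metis card.empty)
qed

lemma occ_single1: "occ {x..<x+1} (W x) = 1"
proof -
  have "{e\<in>{x..<x+1}. W e = W x} = {x}" by auto
  thus ?thesis unfolding occ_def by simp
qed

lemma cross: assumes pd: "W (p+d) = W p" "0 < d" "d < L" and b: "b \<in> set w" "b \<noteq> W p"
  shows "interlaced w (W p) b \<longleftrightarrow> occ {p+1..<p+d} b = 1"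
proof -
  define i where "i = p mod L"
  define t where "t = p div L"
  have p: "p = i + L * t" unfolding i_def t_def by simp
  have i0: "0 \<le> i" "i < L" using L_pos by (auto simp: i_def)
  have Wi: "W i = W p" using W_mod by (simp add: i_def)
  have e: "p + d = (i + d) + L * t" using p by simp
  have "W (p + d) = W (i + d)" unfolding e by (rule W_per)
  hence Wid: "W (i + d) = W p" using pd(1) by simp
  have sh: "occ {p+1..<p+d} b = occ {i+1..<i+d} b"
    using occ_shift[of "L*t" "i+1" "i+d" b] p by (simp add: add.assoc add.commute add.left_commute)
  show ?thesis
  proof (cases "i + d < L")
    case True
    show ?thesis unfolding sh by (rule linW[of i "i+d" "W p" b]) (use i0 True pd Wi Wid b in auto)
  next
    case False
    define j where "j = i + d - L"
    have j0: "0 \<le> j" "j < i" using False pd i0 by (auto simp: j_def)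
    have Wj: "W j = W p" using W_perL[of j] Wid by (simp add: j_def)
    have l: "interlaced w (W p) b \<longleftrightarrow> occ {j+1..<i} b = 1"
      by (rule linW) (use j0 i0 Wj Wi b in auto)
    have "occ {j..<j+L} b = 2" by (rule occ_window[OF b(1)])
    moreover have "occ {j..<j+L} b = occ {j..<j+1} b + occ {j+1..<i} b + occ {i..<i+1} b + occ {i+1..<i+d} b"
    proof -
      have "occ {j..<j+L} b = occ {j..<j+1} b + occ {j+1..<j+L} b" by (rule occ_split) (use j0 L_pos in auto)
      moreover have "occ {j+1..<j+L} b = occ {j+1..<i} b + occ {i..<j+L} b" by (rule occ_split) (use j0 i0 in auto)
      moreover have "occ {i..<j+L} b = occ {i..<i+1} b + occ {i+1..<j+L} b" by (rule occ_split) (use j0 i0 pd in \<open>auto simp: j_def\<close>)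
      moreover have "j + L = i + d" by (simp add: j_def)
      ultimately show ?thesis by simp
    qed
    moreover have "occ {j..<j+1} b = 0" by (rule occ_single0) (use Wj b in auto)
    moreover have "occ {i..<i+1} b = 0" by (rule occ_single0) (use Wi b in auto)
    ultimately have "occ {j+1..<i} b + occ {i+1..<i+d} b = 2" by simp
    thus ?thesis unfolding sh l by auto
  qed
qed


lemma inter_sym: "interlaced w a b \<longleftrightarrow> interlaced w b a"
  unfolding interlaced_def by blast

lemma occ_pos: "x \<in> A \<Longrightarrow> finite A \<Longrightarrow> W x = b \<Longrightarrow> occ A b \<ge> 1"
proof -
  assume a: "x \<in> A" "finite A" "W x = b"
  have "x \<in> {e\<in>A. W e = b}" using a by auto
  moreover have "finite {e\<in>A. W e = b}" using a by auto
  ultimately have "card {e\<in>A. W e = b} \<noteq> 0" by auto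
  thus ?thesis by (simp add: occ_def)
qed

lemma occ_mono: "A \<subseteq> B \<Longrightarrow> finite B \<Longrightarrow> occ A b \<le> occ B b"
  unfolding occ_def by (rule card_mono) auto

lemma occ_two: assumes "occ A b = 2" obtains x y where "x \<in> A" "y \<in> A" "x < y" "W x = b" "W y = b"
proof -
  have "card {e\<in>A. W e = b} = 2" using assms by (simp add: occ_def)
  then obtain x y where xy: "x \<noteq> y" "{e\<in>A. W e = b} = {x,y}"
    by (auto simp: card_Suc_eq numeral_2_eq_2)
  have "x \<in> A" "y \<in> A" "W x = b" "W y = b" using xy by auto
  thus ?thesis using that[of x y] that[of y x] xy(1) by (cases "x < y") auto
qed

lemma self_occ0: assumes "W (p+d) = W p" "0 < d" "d < L" shows "occ {p+1..<p+d} (W p) = 0"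
proof -
  have f: "{e\<in>{p..<p+L}. W e = W p} = {p, p+d}" by (rule fib) (use assms L_pos in auto)
  have "{e\<in>{p+1..<p+d}. W e = W p} = {}"
  proof (rule ccontr)
    assume "{e\<in>{p+1..<p+d}. W e = W p} \<noteq> {}"
    then obtain e where e: "e \<in> {p+1..<p+d}" "W e = W p" by auto
    hence "e \<in> {e\<in>{p..<p+L}. W e = W p}" using assms by auto
    hence "e \<in> {p, p+d}" using f by blast
    thus False using e by auto
  qed
  thus ?thesis unfolding occ_def by (metis card.empty)
qed

lemma card_arc: "card {lo..<hi::int} = nat (hi - lo)" by simp


lemma seg: assumes "hi - lo \<le> L" "occ {lo..<hi} x = 0" "occ {lo..<hi} y = 2" "x \<in> set w"
  shows "\<not> interlaced w y x"
proof
  assume i: "interlaced w y x"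
  obtain x1 x2 where xy: "x1 \<in> {lo..<hi}" "x2 \<in> {lo..<hi}" "x1 < x2" "W x1 = y" "W x2 = y"
    by (rule occ_two[OF assms(3)])
  have ch: "W (x1 + (x2 - x1)) = W x1" "0 < x2 - x1" "x2 - x1 < L" using xy assms(1) by auto
  have ne: "x \<noteq> W x1" using assms(2,3) xy by auto
  have "occ {x1+1..<x1+(x2-x1)} x = 1" using cross[OF ch assms(4) ne] i xy by simp
  moreover have "occ {x1+1..<x1+(x2-x1)} x \<le> occ {lo..<hi} x" by (rule occ_mono) (use xy in auto)
  ultimately show False using assms(2) by simp
qed

end

locale cw = dw +
  assumes deg3: "\<forall>a\<in>set w. card {b\<in>set w. interlaced w a b} = 3"
  and nocut: "\<And>lo hi. hi - lo \<le> L \<Longrightarrow> (\<exists>b\<in>set w. occ {lo..<hi} b = 0) \<Longrightarrow> (\<exists>b\<in>set w. occ {lo..<hi} b = 2)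
      \<Longrightarrow> card {b\<in>set w. occ {lo..<hi} b = 1} \<ge> 3"
  and Lbig: "L \<ge> 10"
begin

lemma single_eq: assumes "W (p+d) = W p" "0 < d" "d < L"
  shows "{b\<in>set w. occ {p+1..<p+d} b = 1} = {b\<in>set w. interlaced w (W p) b}"
proof -
  have "occ {p+1..<p+d} (W p) = 0" by (rule self_occ0[OF assms])
  moreover have "\<not> interlaced w (W p) (W p)" unfolding interlaced_def by simp
  ultimately show ?thesis using cross[OF assms] by force
qed

lemma arc_count: assumes "W (p+d) = W p" "0 < d" "d < L"
  shows "d - 1 = 3 + 2 * int (card {b\<in>set w. occ {p+1..<p+d} b = 2})"
proof -
  have c: "card {p+1..<p+d} = card {b\<in>set w. occ {p+1..<p+d} b = 1} + 2 * card {b\<in>set w. occ {p+1..<p+d} b = 2}"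
    by (rule count_arc[of _ "p+1"]) (use assms in auto)
  have "card {b\<in>set w. occ {p+1..<p+d} b = 1} = 3"
    unfolding single_eq[OF assms] using deg3 W_in by blast
  moreover have "card {p+1..<p+d} = nat (d - 1)" by simp
  ultimately have "nat (d - 1) = 3 + 2 * card {b\<in>set w. occ {p+1..<p+d} b = 2}" using c by simp
  thus ?thesis using assms by linarith
qed

lemma nofull_4: assumes "W (p+d) = W p" "0 < d" "d < L" "\<forall>b\<in>set w. occ {p+1..<p+d} b \<noteq> 2"
  shows "d = 4"
proof -
  have "{b\<in>set w. occ {p+1..<p+d} b = 2} = {}" using assms(4) by auto
  hence "card {b\<in>set w. occ {p+1..<p+d} b = 2} = 0" by (simp only: card.empty)
  thus ?thesis using arc_count[OF assms(1-3)] by linarith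
qed

lemma short: assumes pd: "W (p+d) = W p" "0 < d" "d < L" and c: "occ {p+1..<p+d} (W (p+1)) = 1"
  shows "d = 4"
proof (rule nofull_4[OF pd], rule ccontr)
  assume "\<not> (\<forall>b\<in>set w. occ {p+1..<p+d} b \<noteq> 2)"
  then obtain b where b: "b \<in> set w" "occ {p+1..<p+d} b = 2" by auto
  have d2: "d \<ge> 2" using c pd by (cases "d = 1") (auto simp: occ_def)
  have spl: "\<And>x. occ {p+1..<p+d} x = occ {p+1..<p+2} x + occ {p+2..<p+d} x"
    by (rule occ_split) (use d2 in auto)
  have bc: "b \<noteq> W (p+1)" using b c by auto
  have "occ {p+1..<p+2} b = 0" using occ_single0[of "p+1" b] bc by (simp add: add.assoc)
  hence b2: "occ {p+2..<p+d} b = 2" using spl[of b] b by simp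
  have a0: "occ {p+2..<p+d} (W p) = 0"
    using occ_mono[of "{p+2..<p+d}" "{p+1..<p+d}" "W p"] self_occ0[OF pd] by simp
  have "card {x\<in>set w. occ {p+2..<p+d} x = 1} \<ge> 3"
    by (rule nocut) (use pd b b2 a0 W_in in auto)
  moreover have "{x\<in>set w. occ {p+2..<p+d} x = 1} \<subseteq> {x\<in>set w. occ {p+1..<p+d} x = 1} - {W (p+1)}"
  proof
    fix x assume x: "x \<in> {x\<in>set w. occ {p+2..<p+d} x = 1}"
    have "occ {p+1..<p+2} (W (p+1)) = 1" using occ_single1[of "p+1"] by (simp add: add.assoc)
    hence "x \<noteq> W (p+1)" using x spl[of x] c by auto
    moreover hence "occ {p+1..<p+2} x = 0" using occ_single0[of "p+1" x] by (simp add: add.assoc)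
    ultimately show "x \<in> {x\<in>set w. occ {p+1..<p+d} x = 1} - {W (p+1)}" using x spl[of x] by simp
  qed
  moreover have "card ({x\<in>set w. occ {p+1..<p+d} x = 1} - {W (p+1)}) = 2"
  proof -
    have "card {x\<in>set w. occ {p+1..<p+d} x = 1} = 3"
      unfolding single_eq[OF pd] using deg3 W_in by blast
    moreover have "W (p+1) \<in> {x\<in>set w. occ {p+1..<p+d} x = 1}" using c W_in by auto
    ultimately show ?thesis by simp
  qed
  moreover have "finite ({x\<in>set w. occ {p+1..<p+d} x = 1} - {W (p+1)})" by auto
  ultimately show False using card_mono by (metis (no_types, lifting) le_trans numeral_le_iff semiring_norm(69,72) not_less_eq_eq numeral_2_eq_2 numeral_3_eq_3)
qed


lemma step: assumes "W (p+4) = W p" shows "W (p+3) = W (p+7)"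
proof -
  have pd: "W (p+4) = W p" "(0::int) < 4" "4 < L" using assms Lbig by auto
  have "3 = 3 + 2 * int (card {b\<in>set w. occ {p+1..<p+4} b = 2})" using arc_count[OF pd] by simp
  hence nf: "\<forall>b\<in>set w. occ {p+1..<p+4} b \<noteq> 2" by auto
  define r where "r = W (p+3)"
  have r1: "occ {p+1..<p+4} r \<ge> 1" by (rule occ_pos[of "p+3"]) (auto simp: r_def)
  have r2: "occ {p+1..<p+4} r \<le> 2" by (rule occ_le2[of _ "p+1"]) (use Lbig in auto)
  have rin: "r \<in> set w" by (simp add: r_def W_in)
  have ro: "occ {p+1..<p+4} r = 1" using r1 r2 nf rin by fastforce
  have rp: "r \<noteq> W p" using ro self_occ0[OF pd] by auto
  have "interlaced w (W p) r" using cross[OF pd rin rp] ro by simp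
  hence ir: "interlaced w r (W p)" using inter_sym by blast
  obtain d' where d': "0 < d'" "d' < L" "W (p + 3 + d') = W (p+3)" using partner by blast
  have pd': "W ((p+3) + d') = W (p+3)" "0 < d'" "d' < L" using d' by (auto simp: add.assoc)
  have "occ {(p+3)+1..<(p+3)+d'} (W p) = 1"
    using cross[OF pd'] ir rp W_in[of p] by (simp add: r_def)
  moreover have "W ((p+3)+1) = W p" using assms by (simp add: add.assoc)
  ultimately have "occ {(p+3)+1..<(p+3)+d'} (W ((p+3)+1)) = 1" by simp
  hence "d' = 4" by (rule short[OF pd'])
  thus ?thesis using d' by (simp add: add.assoc)
qed

lemma first: "\<exists>k. W (k+4) = W k"
proof -
  define P where "P = (\<lambda>d::nat. \<exists>p. 0 < int d \<and> int d < L \<and> W (p + int d) = W p)"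
  obtain d1 where "0 < d1" "d1 < L" "W (0 + d1) = W 0" using partner by blast
  hence "P (nat d1)" unfolding P_def by (intro exI[of _ 0]) auto
  hence ex: "\<exists>d. P d" by blast
  define d0 where "d0 = (LEAST d. P d)"
  have Pd0: "P d0" unfolding d0_def by (rule LeastI_ex[OF ex])
  have min: "\<And>d. P d \<Longrightarrow> d0 \<le> d" unfolding d0_def by (rule Least_le)
  obtain p where p: "0 < int d0" "int d0 < L" "W (p + int d0) = W p" using Pd0 unfolding P_def by blast
  have "\<forall>b\<in>set w. occ {p+1..<p+int d0} b \<noteq> 2"
  proof (rule ballI, rule notI)
    fix b assume "b \<in> set w" and h2: "occ {p+1..<p+int d0} b = 2"
    obtain x y where xy: "x \<in> {p+1..<p+int d0}" "y \<in> {p+1..<p+int d0}" "x < y" "W x = b" "W y = b"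
      by (rule occ_two[OF h2])
    have "P (nat (y - x))" unfolding P_def
      by (rule exI[of _ x]) (use xy p in auto)
    hence "d0 \<le> nat (y - x)" by (rule min)
    thus False using xy by auto
  qed
  hence "int d0 = 4" by (rule nofull_4[OF p(3) p(1) p(2)])
  thus ?thesis using p by auto
qed

lemma family_nat: assumes "W (k+4) = W k" shows "W (k + 3 * int m + 4) = W (k + 3 * int m)"
proof (induction m)
  case 0 thus ?case using assms by simp
next
  case (Suc m)
  have "W (k + 3 * int m + 3) = W (k + 3 * int m + 7)"
    using step[of "k + 3 * int m"] Suc by (simp add: add.assoc)
  thus ?case by (simp add: algebra_simps)
qed

lemma family: assumes "W (k+4) = W k" shows "W (k + 3 * m + 4) = W (k + 3 * m)"
proof -
  define m' where "m' = m mod L"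
  have m'0: "m' \<ge> 0" using L_pos by (simp add: m'_def)
  have e: "m = m' + L * (m div L)" by (simp add: m'_def)
  have h: "W (k + 3 * int (nat m') + 4) = W (k + 3 * int (nat m'))" by (rule family_nat[OF assms])
  have e1: "k + 3 * m + 4 = (k + 3 * m' + 4) + L * (3 * (m div L))" by (subst e) (simp add: algebra_simps)
  have e2: "k + 3 * m = (k + 3 * m') + L * (3 * (m div L))" by (subst e) (simp add: algebra_simps)
  have "W (k + 3 * m + 4) = W (k + 3 * m' + 4)" unfolding e1 by (rule W_per)
  moreover have "W (k + 3 * m) = W (k + 3 * m')" unfolding e2 by (rule W_per)
  ultimately show ?thesis using h m'0 by simp
qed


lemma three_mod: assumes "W x = W y" "W y = W z" "x mod L \<noteq> y mod L" "y mod L \<noteq> z mod L" "x mod L \<noteq> z mod L"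
  shows False
proof -
  have "W (x mod L) = W (y mod L)" "W (y mod L) = W (z mod L)" using assms W_mod by auto
  thus False by (rule three[of _ _ _ 0]) (use assms L_pos in auto)
qed

lemma modL_ne: assumes "0 < \<bar>x - y\<bar>" "\<bar>x - y\<bar> < L" shows "x mod L \<noteq> y mod L"
proof
  assume "x mod L = y mod L"
  hence "L dvd (x - y)" by (simp add: mod_eq_dvd_iff)
  then obtain c where c: "x - y = L * c" by (auto elim: dvdE)
  have "c \<noteq> 0" using c assms by auto
  hence "\<bar>c\<bar> \<ge> 1" by simp
  hence "L * \<bar>c\<bar> \<ge> L" using L_pos by simp
  thus False using c assms L_pos by (simp add: abs_mult)
qed

end

locale cwk = cw +
  fixes k :: int
  assumes fk: "W (k+4) = W k"
begin

lemma fam: "W (k + 3 * m + 4) = W (k + 3 * m)" by (rule family[OF fk])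

lemma m3: "(x - k) mod 3 = r \<Longrightarrow> x = k + 3 * ((x - k) div 3) + r"
  using mult_div_mod_eq[of 3 "x - k"] by linarith

lemma m3e: "(x - k) mod 3 = r \<Longrightarrow> \<exists>q. x = k + 3 * q + r"
  using m3 by blast

lemma m3r: "(k + 3 * q + r - k) mod 3 = r mod 3"
proof -
  have "k + 3 * q + r - k = r + 3 * q" by simp
  thus ?thesis by simp
qed

lemma mod3h: "(r + 3 * z) mod 3 = r mod (3::int)" by simp

lemma mod3_cases: "(x::int) mod 3 = 0 \<or> x mod 3 = 1 \<or> x mod 3 = 2" by presburger

lemma fam0: assumes "(x - k) mod 3 = 0" shows "W (x + 4) = W x"
proof -
  have "x = k + 3 * ((x - k) div 3)" using m3[OF assms] by simp
  hence "W (x + 4) = W (k + 3 * ((x - k) div 3) + 4)" "W x = W (k + 3 * ((x - k) div 3))" by simp_all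
  thus ?thesis using fam by simp
qed

lemma fam1: assumes "(x - k) mod 3 = 1" shows "W (x - 4) = W x"
proof -
  define q where "q = (x - k) div 3 - 1"
  have "x = k + 3 * q + 4" using m3[OF assms] by (simp add: q_def)
  hence "W (x - 4) = W (k + 3 * q)" "W x = W (k + 3 * q + 4)" by simp_all
  thus ?thesis using fam[of q] by simp
qed

lemma div3: "3 dvd L"
proof (rule ccontr)
  assume nd: "\<not> 3 dvd L"
  have "L mod 3 = 1 \<or> L mod 3 = 2" using nd mod3_cases[of L] by auto
  hence "\<exists>m c. 3 * m = 4 - L * c"
  proof
    assume h: "L mod 3 = 1"
    obtain q where q: "L = 3 * q + 1" using mult_div_mod_eq[of 3 L] h by (metis add.commute)
    have "3 * (1 - q) = 4 - L * 1" using q by simp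
    thus ?thesis by blast
  next
    assume h: "L mod 3 = 2"
    obtain q where q: "L = 3 * q + 2" using mult_div_mod_eq[of 3 L] h by (metis add.commute)
    have "3 * (- 2 * q) = 4 - L * 2" using q by simp
    thus ?thesis by blast
  qed
  then obtain m c where mc: "3 * m = 4 - L * c" by blast
  have e1: "k + 4 = (k + 3 * m) + L * c" using mc by simp
  have e2: "k + 8 = (k + 3 * m + 4) + L * c" using mc by simp
  have "W (k + 4) = W (k + 3 * m)" unfolding e1 by (rule W_per)
  moreover have "W (k + 8) = W (k + 3 * m + 4)" unfolding e2 by (rule W_per)
  ultimately have "W k = W (k+4)" "W (k+4) = W (k+8)" using fam[of m] fk by auto
  moreover have "k mod L \<noteq> (k+4) mod L" "(k+4) mod L \<noteq> (k+8) mod L" "k mod L \<noteq> (k+8) mod L"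
    using modL_ne[of k "k+4"] modL_ne[of "k+4" "k+8"] modL_ne[of k "k+8"] Lbig by auto
  ultimately show False using three_mod by blast
qed

lemma mod3_ne: assumes "(x - y) mod 3 \<noteq> 0" shows "x mod L \<noteq> y mod L"
proof
  assume "x mod L = y mod L"
  hence "L dvd (x - y)" by (simp add: mod_eq_dvd_iff)
  hence "3 dvd (x - y)" using div3 by (rule dvd_trans[rotated])
  thus False using assms by simp
qed

lemma cls: assumes "W s = W t" "(s - k) mod 3 = 2" shows "(t - k) mod 3 = 2"
proof (rule ccontr)
  assume nt: "(t - k) mod 3 \<noteq> 2"
  obtain a where s: "s = k + 3 * a + 2" using m3e[OF assms(2)] by blast
  have "(t - k) mod 3 = 0 \<or> (t - k) mod 3 = 1" using nt mod3_cases[of "t - k"] by auto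
  thus False
  proof
    assume t0: "(t - k) mod 3 = 0"
    obtain c where t: "t = k + 3 * c + 0" using m3e[OF t0] by blast
    have "W t = W (t+4)" using fam0[OF t0] by simp
    moreover have "s mod L \<noteq> t mod L"
    proof (rule mod3_ne)
      have e: "s - t = 2 + 3 * (a - c)" using s t by simp
      have "(s - t) mod 3 = 2 mod 3" unfolding e by (rule mod3h)
      thus "(s - t) mod 3 \<noteq> 0" by simp
    qed
    moreover have "t mod L \<noteq> (t+4) mod L" by (rule mod3_ne) simp
    moreover have "s mod L \<noteq> (t+4) mod L"
    proof (rule mod3_ne)
      have e: "s - (t + 4) = 1 + 3 * (a - c - 1)" using s t by simp
      have "(s - (t + 4)) mod 3 = 1 mod 3" unfolding e by (rule mod3h)
      thus "(s - (t + 4)) mod 3 \<noteq> 0" by simp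
    qed
    ultimately show False using three_mod[of s t "t+4"] assms(1) by simp
  next
    assume t1: "(t - k) mod 3 = 1"
    obtain c where t: "t = k + 3 * c + 1" using m3e[OF t1] by blast
    have "W t = W (t-4)" using fam1[OF t1] by simp
    moreover have "s mod L \<noteq> t mod L"
    proof (rule mod3_ne)
      have e: "s - t = 1 + 3 * (a - c)" using s t by simp
      have "(s - t) mod 3 = 1 mod 3" unfolding e by (rule mod3h)
      thus "(s - t) mod 3 \<noteq> 0" by simp
    qed
    moreover have "t mod L \<noteq> (t-4) mod L" by (rule mod3_ne) simp
    moreover have "s mod L \<noteq> (t-4) mod L"
    proof (rule mod3_ne)
      have e: "s - (t - 4) = 2 + 3 * (a - c + 1)" using s t by simp
      have "(s - (t - 4)) mod 3 = 2 mod 3" unfolding e by (rule mod3h)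
      thus "(s - (t - 4)) mod 3 \<noteq> 0" by simp
    qed
    ultimately show False using three_mod[of s t "t-4"] assms(1) by simp
  qed
qed


lemma occ_ge2: assumes "x \<in> A" "y \<in> A" "x \<noteq> y" "W x = b" "W y = b" "finite A" shows "occ A b \<ge> 2"
proof -
  have "{x,y} \<subseteq> {e\<in>A. W e = b}" using assms by auto
  hence "card {x,y} \<le> card {e\<in>A. W e = b}" by (rule card_mono[rotated]) (use assms in auto)
  thus ?thesis using assms(3) by (simp add: occ_def)
qed

lemma occ_ex: assumes "occ A b \<ge> 1" obtains x where "x \<in> A" "W x = b"
proof -
  have "card {e\<in>A. W e = b} \<noteq> 0" using assms by (simp add: occ_def)
  hence "{e\<in>A. W e = b} \<noteq> {}" by (metis card.empty)
  thus ?thesis using that by auto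
qed

lemma crossers3: assumes "W (p+d) = W p" "0 < d" "d < L"
  shows "card {b\<in>set w. occ {p+1..<p+d} b = 1} = 3"
  unfolding single_eq[OF assms] using deg3 W_in by blast

lemma four_in3: assumes "card S = 3" "a \<in> S" "b \<in> S" "c \<in> S" "d \<in> S"
  "a \<noteq> b" "a \<noteq> c" "a \<noteq> d" "b \<noteq> c" "b \<noteq> d" "c \<noteq> d" shows False
proof -
  have "finite S" using assms(1) by (metis card.infinite zero_neq_numeral)
  have "{a,b,c,d} \<subseteq> S" using assms by auto
  hence "card {a,b,c,d} \<le> card S" by (rule card_mono[OF \<open>finite S\<close>])
  moreover have "card {a,b,c,d} = 4" using assms by simp
  ultimately show False using assms(1) by simp
qed

lemma cr2: assumes s: "(s - k) mod 3 = 2" and se: "W (s+e) = W s" "0 < e" "e < L"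
  and u: "(u - k) mod 3 = 2" and v: "(v - k) mod 3 = 2" and uv: "W u \<noteq> W v"
  and iu: "interlaced w (W s) (W u)" and iv: "interlaced w (W s) (W v)"
  shows False
proof -
  have "((s + e) - k) mod 3 = 2" using cls[of s "s+e"] se s by simp
  hence e3: "e mod 3 = 0" using s by presburger
  have L3: "L mod 3 = 0" using div3 by simp
  have eL: "e \<le> L - 3" using e3 L3 se by presburger
  have "e \<noteq> 3"
  proof
    assume "e = 3"
    thus False using arc_count[OF se] by presburger
  qed
  hence e6: "e \<ge> 6" using e3 se by presburger
  define A where "A = {s+1..<s+e}"
  have finA: "finite A" by (simp add: A_def)
  have c3: "card {b\<in>set w. occ A b = 1} = 3" unfolding A_def by (rule crossers3[OF se])
  have m1: "(s + 2 - k) mod 3 = 1" using s by presburger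
  have W2: "W (s+2-4) = W (s+2)" by (rule fam1[OF m1])
  have o1: "occ A (W (s+2)) = 1"
  proof -
    have "occ A (W (s+2)) = card ({s+2-4, s+2} \<inter> A)"
      by (rule occ_sub[where lo="s-2"]) (use W2 eL L3 Lbig in \<open>auto simp: A_def\<close>)
    also have "{s+2-4, s+2} \<inter> A = {s+2}" using e6 by (auto simp: A_def)
    finally show ?thesis by simp
  qed
  have m0: "(s + e - 2 - k) mod 3 = 0" using s e3 by presburger
  have W3: "W (s+e-2+4) = W (s+e-2)" by (rule fam0[OF m0])
  have o2: "occ A (W (s+e-2)) = 1"
  proof -
    have "occ A (W (s+e-2)) = card ({s+e-2, s+e-2+4} \<inter> A)"
      by (rule occ_sub[where lo="s+1"]) (use W3 eL L3 e6 Lbig in \<open>auto simp: A_def\<close>)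
    also have "{s+e-2, s+e-2+4} \<inter> A = {s+e-2}" using e6 by (auto simp: A_def)
    finally show ?thesis by simp
  qed
  have d12: "W (s+2) \<noteq> W (s+e-2)"
  proof
    assume "W (s+2) = W (s+e-2)"
    hence "occ A (W (s+2)) \<ge> 2" by (intro occ_ge2[of "s+2" _ "s+e-2"]) (use e6 finA in \<open>auto simp: A_def\<close>)
    thus False using o1 by simp
  qed
  have nu: "W s \<noteq> W u" "W s \<noteq> W v" using iu iv unfolding interlaced_def by auto
  have ou: "occ A (W u) = 1" using cross[OF se W_in nu(1)[symmetric]] iu by (simp add: A_def)
  have ov: "occ A (W v) = 1" using cross[OF se W_in nu(2)[symmetric]] iv by (simp add: A_def)
  have cu: "W u \<noteq> W (s+2)" "W u \<noteq> W (s+e-2)" "W v \<noteq> W (s+2)" "W v \<noteq> W (s+e-2)"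
    using cls[of u "s+2"] cls[of u "s+e-2"] cls[of v "s+2"] cls[of v "s+e-2"] u v m1 m0 by auto
  show False
    by (rule four_in3[OF c3, of "W (s+2)" "W (s+e-2)" "W u" "W v"])
       (use o1 o2 ou ov W_in d12 cu uv in auto)
qed


lemma six: "\<exists>p. (p - k) mod 3 = 2 \<and> W (p+6) = W p"
proof -
  define P where "P = (\<lambda>d::nat. \<exists>p. (p - k) mod 3 = 2 \<and> 0 < int d \<and> int d < L \<and> W (p + int d) = W p)"
  obtain d1 where d1: "0 < d1" "d1 < L" "W ((k+2) + d1) = W (k+2)" using partner by blast
  hence "P (nat d1)" unfolding P_def by (intro exI[of _ "k+2"]) auto
  hence ex: "\<exists>d. P d" by blast
  define d0 where "d0 = (LEAST d. P d)"
  have Pd0: "P d0" unfolding d0_def by (rule LeastI_ex[OF ex])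
  have min: "\<And>d. P d \<Longrightarrow> d0 \<le> d" unfolding d0_def by (rule Least_le)
  obtain p where p: "(p - k) mod 3 = 2" "0 < int d0" "int d0 < L" "W (p + int d0) = W p"
    using Pd0 unfolding P_def by blast
  define D where "D = int d0"
  have pd: "W (p + D) = W p" "0 < D" "D < L" using p by (auto simp: D_def)
  have "((p + D) - k) mod 3 = 2" using cls[of p "p+D"] pd p by simp
  hence D3: "D mod 3 = 0" using p by presburger
  have L3: "L mod 3 = 0" using div3 by simp
  have DL: "D \<le> L - 3" using D3 L3 pd by presburger
  have "D \<noteq> 3"
  proof
    assume "D = 3"
    thus False using arc_count[OF pd] by presburger
  qed
  hence D6: "D \<ge> 6" using D3 pd by presburger
  define A where "A = {p+1..<p+D}"
  have finA: "finite A" by (simp add: A_def)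
  have sing: "occ A (W z) = 1" if z: "(z - k) mod 3 = 2" "z \<in> A" for z
  proof -
    have "occ A (W z) \<ge> 1" by (rule occ_pos[OF z(2) finA]) simp
    moreover have "occ A (W z) \<le> 2" by (rule occ_le2[where lo="p+1"]) (use DL in \<open>auto simp: A_def\<close>)
    moreover have "occ A (W z) \<noteq> 2"
    proof
      assume h2: "occ A (W z) = 2"
      obtain x y where xy: "x \<in> A" "y \<in> A" "x < y" "W x = W z" "W y = W z" by (rule occ_two[OF h2])
      have "(x - k) mod 3 = 2" using cls[of z x] xy z by simp
      hence "P (nat (y - x))" unfolding P_def
        by (intro exI[of _ x]) (use xy pd in \<open>auto simp: A_def\<close>)
      hence "d0 \<le> nat (y - x)" by (rule min)
      thus False using xy by (auto simp: A_def D_def)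
    qed
    ultimately show ?thesis by simp
  qed
  have "D = 6"
  proof (rule ccontr)
    assume "D \<noteq> 6"
    hence D9: "D \<ge> 9" using D6 D3 by presburger
    have c3: "card {b\<in>set w. occ A b = 1} = 3" unfolding A_def by (rule crossers3[OF pd])
    have m1: "(p + 2 - k) mod 3 = 1" using p by presburger
    have W2: "W (p+2-4) = W (p+2)" by (rule fam1[OF m1])
    have o1: "occ A (W (p+2)) = 1"
    proof -
      have "occ A (W (p+2)) = card ({p+2-4, p+2} \<inter> A)"
        by (rule occ_sub[where lo="p-2"]) (use W2 DL L3 Lbig in \<open>auto simp: A_def\<close>)
      also have "{p+2-4, p+2} \<inter> A = {p+2}" using D6 by (auto simp: A_def)
      finally show ?thesis by simp
    qed
    have m0: "(p + D - 2 - k) mod 3 = 0" using p D3 by presburger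
    have W3: "W (p+D-2+4) = W (p+D-2)" by (rule fam0[OF m0])
    have o2: "occ A (W (p+D-2)) = 1"
    proof -
      have "occ A (W (p+D-2)) = card ({p+D-2, p+D-2+4} \<inter> A)"
        by (rule occ_sub[where lo="p+1"]) (use W3 DL L3 D6 Lbig in \<open>auto simp: A_def\<close>)
      also have "{p+D-2, p+D-2+4} \<inter> A = {p+D-2}" using D6 by (auto simp: A_def)
      finally show ?thesis by simp
    qed
    have d12: "W (p+2) \<noteq> W (p+D-2)"
    proof
      assume "W (p+2) = W (p+D-2)"
      hence "occ A (W (p+2)) \<ge> 2" by (intro occ_ge2[of "p+2" _ "p+D-2"]) (use D6 finA in \<open>auto simp: A_def\<close>)
      thus False using o1 by simp
    qed
    have c3a: "(p + 3 - k) mod 3 = 2" "(p + 6 - k) mod 3 = 2" using p by presburger+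
    have o3: "occ A (W (p+3)) = 1" by (rule sing) (use c3a D9 in \<open>auto simp: A_def\<close>)
    have o6: "occ A (W (p+6)) = 1" by (rule sing) (use c3a D9 in \<open>auto simp: A_def\<close>)
    have d36: "W (p+3) \<noteq> W (p+6)"
    proof
      assume "W (p+3) = W (p+6)"
      hence "occ A (W (p+3)) \<ge> 2" by (intro occ_ge2[of "p+3" _ "p+6"]) (use D9 finA in \<open>auto simp: A_def\<close>)
      thus False using o3 by simp
    qed
    have cu: "W (p+3) \<noteq> W (p+2)" "W (p+3) \<noteq> W (p+D-2)" "W (p+6) \<noteq> W (p+2)" "W (p+6) \<noteq> W (p+D-2)"
      using cls[of "p+3" "p+2"] cls[of "p+3" "p+D-2"] cls[of "p+6" "p+2"] cls[of "p+6" "p+D-2"] c3a m1 m0 by auto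
    show False
      by (rule four_in3[OF c3, of "W (p+2)" "W (p+D-2)" "W (p+3)" "W (p+6)"])
         (use o1 o2 o3 o6 W_in d12 cu d36 in auto)
  qed
  thus ?thesis using pd p by auto
qed


lemma three_d: assumes "W x = W y" "W y = W z" "0 < \<bar>x - y\<bar>" "\<bar>x - y\<bar> < L"
  "0 < \<bar>y - z\<bar>" "\<bar>y - z\<bar> < L" "0 < \<bar>x - z\<bar>" "\<bar>x - z\<bar> < L" shows False
  using three_mod[OF assms(1,2)] modL_ne assms by metis

end

locale cwkp = cwk +
  fixes p :: int
  assumes pc: "(p - k) mod 3 = 2" and p6: "W (p+6) = W p"
begin

lemma L3: "L mod 3 = 0" using div3 by simp

lemma YZ: "W (p+3) \<noteq> W p"
proof
  assume "W (p+3) = W p"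
  thus False using three_d[of p "p+3" "p+6"] p6 Lbig by auto
qed

lemma iZY: "interlaced w (W (p+3)) (W p)"
proof -
  have pd: "W (p+6) = W p" "(0::int) < 6" "6 < L" using p6 Lbig by auto
  have "occ {p+1..<p+6} (W (p+3)) = 1"
  proof -
    have "occ {p+1..<p+6} (W (p+3)) \<ge> 1" by (rule occ_pos) auto
    moreover have "occ {p+1..<p+6} (W (p+3)) \<le> 2" by (rule occ_le2[where lo="p+1"]) (use Lbig in auto)
    moreover have "occ {p+1..<p+6} (W (p+3)) \<noteq> 2"
    proof
      assume h2: "occ {p+1..<p+6} (W (p+3)) = 2"
      obtain x y where xy: "x \<in> {p+1..<p+6}" "y \<in> {p+1..<p+6}" "x < y" "W x = W (p+3)" "W y = W (p+3)"
        by (rule occ_two[OF h2])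
      have "(p + 3 - k) mod 3 = 2" using pc by presburger
      hence xc: "(x - k) mod 3 = 2" "(y - k) mod 3 = 2" using cls[of "p+3" x] cls[of "p+3" y] xy by auto
      have b: "p+1 \<le> x" "y < p+6" "x < y" using xy by auto
      show False using xc b pc by presburger
    qed
    ultimately show ?thesis by simp
  qed
  hence "interlaced w (W p) (W (p+3))" using cross[OF pd W_in YZ] by simp
  thus ?thesis using inter_sym by blast
qed

lemma get_t: "\<exists>t. W (p+t) = W (p+3) \<and> 9 \<le> t \<and> t \<le> L - 3 \<and> t mod 3 = 0"
proof -
  obtain d where d: "0 < d" "d < L" "W (p + 3 + d) = W (p+3)" using partner by blast
  have "(p + 3 - k) mod 3 = 2" using pc by presburger
  hence "((p + 3 + d) - k) mod 3 = 2" using cls[of "p+3" "p+3+d"] d by simp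
  hence t3: "(3 + d) mod 3 = 0" using pc by presburger
  have "3 + d \<noteq> 6" using d YZ p6 by (auto simp: add.assoc)
  moreover have "3 + d \<noteq> L"
  proof
    assume "3 + d = L"
    hence e: "p + 3 + d = p + L" by simp
    have "W (p + 3 + d) = W (p + L)" by (simp only: e)
    thus False using d YZ W_perL[of p] by simp
  qed
  ultimately have "9 \<le> 3 + d" "3 + d \<le> L - 3" using t3 L3 d by presburger+
  thus ?thesis using d t3 by (intro exI[of _ "3+d"]) (auto simp: add.assoc)
qed

context
  fixes t assumes tt: "W (p+t) = W (p+3)" "9 \<le> t" "t \<le> L - 3" "t mod 3 = 0"
begin

lemma Zchord: "W ((p+3) + (t-3)) = W (p+3)" "0 < t - 3" "t - 3 < L"
  using tt by auto

lemma inner: assumes "(y - k) mod 3 = 2" "p+6 < y" "y < p+t" shows "occ {p+4..<p+t} (W y) = 2"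
proof -
  have "occ {p+4..<p+t} (W y) \<ge> 1" by (rule occ_pos) (use assms in auto)
  moreover have "occ {p+4..<p+t} (W y) \<le> 2" by (rule occ_le2[where lo="p+4"]) (use tt in auto)
  moreover have "occ {p+4..<p+t} (W y) \<noteq> 1"
  proof
    assume o1: "occ {p+4..<p+t} (W y) = 1"
    have z0: "occ {(p+3)+1..<(p+3)+(t-3)} (W (p+3)) = 0" by (rule self_occ0[OF Zchord])
    have eq: "{(p+3)+1..<(p+3)+(t-3)} = {p+4..<p+t}" by auto
    hence z0': "occ {p+4..<p+t} (W (p+3)) = 0" using z0 by simp
    have ny: "W y \<noteq> W (p+3)" using o1 z0' by auto
    have c: "interlaced w (W (p+3)) (W y) \<longleftrightarrow> occ {(p+3)+1..<(p+3)+(t-3)} (W y) = 1"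
      by (rule cross[OF Zchord W_in]) (use ny in simp)
    have i1: "interlaced w (W (p+3)) (W y)" using c o1 unfolding eq by simp
    have "W y \<noteq> W p"
    proof
      assume "W y = W p"
      thus False using three_d[of p "p+6" y] p6 assms tt by auto
    qed
    have pc3: "(p + 3 - k) mod 3 = 2" using pc by presburger
    show False by (rule cr2[OF pc3 Zchord assms(1) pc \<open>W y \<noteq> W p\<close> i1 iZY])
  qed
  ultimately show ?thesis by simp
qed

definition A1 where "A1 = {p..<p+t+1}"

lemma A1Y: "occ A1 (W p) = 2"
proof -
  have "occ A1 (W p) \<ge> 2" by (rule occ_ge2[of p _ "p+6"]) (use tt p6 in \<open>auto simp: A1_def\<close>)
  moreover have "occ A1 (W p) \<le> 2" by (rule occ_le2[where lo=p]) (use tt in \<open>auto simp: A1_def\<close>)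
  ultimately show ?thesis by simp
qed

lemma A1Z: "occ A1 (W (p+3)) \<ge> 2"
  by (rule occ_ge2[of "p+3" _ "p+t"]) (use tt in \<open>auto simp: A1_def\<close>)

lemma s1: assumes "occ A1 b = 1" shows "b = W (p+2) \<or> b = W (p+t-2)"
proof -
  obtain x where x: "x \<in> A1" "W x = b" using occ_ex[of A1 b] assms by auto
  have xr: "p \<le> x" "x \<le> p + t" using x by (auto simp: A1_def)
  have fin: "finite A1" by (simp add: A1_def)
  consider "(x - k) mod 3 = 2" | "(x - k) mod 3 = 0" | "(x - k) mod 3 = 1" using mod3_cases by blast
  thus ?thesis
  proof cases
    case 1
    have "x = p \<or> x = p+3 \<or> x = p+6 \<or> x = p+t \<or> (p+6 < x \<and> x < p+t)" using 1 xr pc tt by presburger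
    moreover have "x \<noteq> p" "x \<noteq> p+6" using A1Y assms x p6 by auto
    moreover have "x \<noteq> p+3" "x \<noteq> p+t" using A1Z assms x tt by auto
    moreover have "\<not> (p+6 < x \<and> x < p+t)"
    proof
      assume h: "p+6 < x \<and> x < p+t"
      have "occ {p+4..<p+t} (W x) = 2" by (rule inner) (use 1 h in auto)
      moreover have "occ {p+4..<p+t} (W x) \<le> occ A1 (W x)" by (rule occ_mono) (auto simp: A1_def)
      ultimately show False using assms x by simp
    qed
    ultimately show ?thesis by blast
  next
    case 2
    have "x + 4 \<le> p + t \<or> x = p + t - 2" using 2 xr pc tt by presburger
    moreover have "\<not> x + 4 \<le> p + t"
    proof
      assume "x + 4 \<le> p + t"
      hence "occ A1 b \<ge> 2" using occ_ge2[of x A1 "x+4" b] fam0[OF 2] x fin by (auto simp: A1_def)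
      thus False using assms by simp
    qed
    ultimately show ?thesis using x by auto
  next
    case 3
    have "p \<le> x - 4 \<or> x = p + 2" using 3 xr pc tt by presburger
    moreover have "\<not> p \<le> x - 4"
    proof
      assume "p \<le> x - 4"
      hence "occ A1 b \<ge> 2" using occ_ge2[of x A1 "x-4" b] fam1[OF 3] x fin by (auto simp: A1_def)
      thus False using assms by simp
    qed
    ultimately show ?thesis using x by auto
  qed
qed

lemma tL: "t = L - 3"
proof (rule ccontr)
  assume "t \<noteq> L - 3"
  hence t6: "t \<le> L - 6" using tt L3 by presburger
  define X where "X = W (p+t+3)"
  have c3: "(p + t + 3 - k) mod 3 = 2" using pc tt by presburger
  have X0: "occ A1 X = 0"
  proof (rule ccontr)
    assume "occ A1 X \<noteq> 0"
    then obtain x where x: "x \<in> A1" "W x = X" using occ_ex[of A1 X] by auto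
    have xr: "p \<le> x" "x \<le> p + t" using x by (auto simp: A1_def)
    have xc: "(x - k) mod 3 = 2" using cls[of "p+t+3" x] c3 x by (simp add: X_def)
    have "x = p \<or> x = p+3 \<or> x = p+6 \<or> x = p+t \<or> (p+6 < x \<and> x < p+t)" using xc xr pc tt by presburger
    moreover have "x \<noteq> p" using three_d[of p "p+6" "p+t+3"] x p6 tt t6 by (auto simp: X_def)
    moreover have "x \<noteq> p+6" using three_d[of p "p+6" "p+t+3"] x p6 tt t6 by (auto simp: X_def)
    moreover have "x \<noteq> p+3" using three_d[of "p+3" "p+t" "p+t+3"] x tt t6 by (auto simp: X_def)
    moreover have "x \<noteq> p+t" using three_d[of "p+3" "p+t" "p+t+3"] x tt t6 by (auto simp: X_def)
    moreover have "\<not> (p+6 < x \<and> x < p+t)"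
    proof
      assume h: "p+6 < x \<and> x < p+t"
      have h2: "occ {p+4..<p+t} X = 2" using inner[of x] xc h x by simp
      obtain x1 x2 where xy: "x1 \<in> {p+4..<p+t}" "x2 \<in> {p+4..<p+t}" "x1 < x2" "W x1 = X" "W x2 = X"
        by (rule occ_two[OF h2])
      show False using three_d[of x1 x2 "p+t+3"] xy tt t6 by (auto simp: X_def)
    qed
    ultimately show False by blast
  qed
  have "card {b\<in>set w. occ {p..<p+t+1} b = 1} \<ge> 3"
    by (rule nocut) (use tt X0 A1Y W_in in \<open>auto simp: A1_def X_def\<close>)
  moreover have "{b\<in>set w. occ {p..<p+t+1} b = 1} \<subseteq> {W (p+2), W (p+t-2)}"
    using s1 by (auto simp: A1_def)
  hence "card {b\<in>set w. occ {p..<p+t+1} b = 1} \<le> card {W (p+2), W (p+t-2)}" by (rule card_mono[rotated]) simp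
  moreover have "card {W (p+2), W (p+t-2)} \<le> 2" by (rule card_insert_le_m1) auto
  ultimately show False by simp
qed


definition A2 where "A2 = {p+L-3..<p+L+7}"

lemma L12: "L = 12"
proof (rule ccontr)
  assume "L \<noteq> 12"
  hence L15: "L \<ge> 15" using L3 Lbig by presburger
  have tl: "t = L - 3" by (rule tL)
  have fin: "finite A2" by (simp add: A2_def)
  have e: "p + L - 3 = p + t" using tl by simp
  have v1: "W (p+L-3) = W (p+3)" unfolding e by (rule tt(1))
  have v2: "W (p+L) = W p" by (rule W_perL)
  have v3: "W (p+L+3) = W (p+3)" using W_perL[of "p+3"] by (simp add: algebra_simps)
  have v4: "W (p+L+6) = W p" using W_perL[of "p+6"] p6 by (simp add: algebra_simps)
  have A2Y: "occ A2 (W p) = 2"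
  proof -
    have "occ A2 (W p) \<ge> 2" by (rule occ_ge2[of "p+L" _ "p+L+6"]) (use v2 v4 fin in \<open>auto simp: A2_def\<close>)
    moreover have "occ A2 (W p) \<le> 2" by (rule occ_le2[where lo="p+L-3"]) (use L15 in \<open>auto simp: A2_def\<close>)
    ultimately show ?thesis by simp
  qed
  have A2Z: "occ A2 (W (p+3)) \<ge> 2"
    by (rule occ_ge2[of "p+L-3" _ "p+L+3"]) (use v1 v3 fin in \<open>auto simp: A2_def\<close>)
  have s2: "b = W (p+L+4) \<or> b = W (p+L-1)" if o: "occ A2 b = 1" for b
  proof -
    obtain x where x: "x \<in> A2" "W x = b" using occ_ex[of A2 b] o by auto
    have xr: "p+L-3 \<le> x" "x \<le> p+L+6" using x by (auto simp: A2_def)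
    consider "(x - k) mod 3 = 2" | "(x - k) mod 3 = 0" | "(x - k) mod 3 = 1" using mod3_cases by blast
    thus ?thesis
    proof cases
      case 1
      have "x = p+L-3 \<or> x = p+L \<or> x = p+L+3 \<or> x = p+L+6" using 1 xr pc L3 by presburger
      thus ?thesis using A2Y A2Z o x v1 v2 v3 v4 by auto
    next
      case 2
      have "x + 4 \<le> p+L+6 \<or> x = p+L+4" using 2 xr pc L3 by presburger
      moreover have "\<not> x + 4 \<le> p+L+6"
      proof
        assume "x + 4 \<le> p+L+6"
        hence "occ A2 b \<ge> 2" using occ_ge2[of x A2 "x+4" b] fam0[OF 2] x fin by (auto simp: A2_def)
        thus False using o by simp
      qed
      ultimately show ?thesis using x by auto
    next
      case 3
      have "p+L-3 \<le> x - 4 \<or> x = p+L-1" using 3 xr pc L3 by presburger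
      moreover have "\<not> p+L-3 \<le> x - 4"
      proof
        assume "p+L-3 \<le> x - 4"
        hence "occ A2 b \<ge> 2" using occ_ge2[of x A2 "x-4" b] fam1[OF 3] x fin by (auto simp: A2_def)
        thus False using o by simp
      qed
      ultimately show ?thesis using x by auto
    qed
  qed
  define X where "X = W (p+9)"
  have c9: "(p + 9 - k) mod 3 = 2" using pc by presburger
  have X0: "occ A2 X = 0"
  proof (rule ccontr)
    assume "occ A2 X \<noteq> 0"
    then obtain x where x: "x \<in> A2" "W x = X" using occ_ex[of A2 X] by auto
    have xr: "p+L-3 \<le> x" "x \<le> p+L+6" using x by (auto simp: A2_def)
    have xc: "(x - k) mod 3 = 2" using cls[of "p+9" x] c9 x by (simp add: X_def)
    have "x = p+L-3 \<or> x = p+L \<or> x = p+L+3 \<or> x = p+L+6" using xc xr pc L3 by presburger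
    hence "X = W p \<or> X = W (p+3)" using x v1 v2 v3 v4 by auto
    moreover have "X \<noteq> W p" using three_d[of p "p+6" "p+9"] p6 L15 by (auto simp: X_def)
    moreover have "X \<noteq> W (p+3)" using three_d[of "p+3" "p+9" "p+L-3"] v1 L15 by (auto simp: X_def)
    ultimately show False by blast
  qed
  have "card {b\<in>set w. occ {p+L-3..<p+L+7} b = 1} \<ge> 3"
    by (rule nocut) (use L15 X0 A2Y W_in in \<open>auto simp: A2_def X_def\<close>)
  moreover have "{b\<in>set w. occ {p+L-3..<p+L+7} b = 1} \<subseteq> {W (p+L+4), W (p+L-1)}"
    using s2 by (auto simp: A2_def)
  hence "card {b\<in>set w. occ {p+L-3..<p+L+7} b = 1} \<le> card {W (p+L+4), W (p+L-1)}" by (rule card_mono[rotated]) simp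
  moreover have "card {W (p+L+4), W (p+L-1)} \<le> 2" by (rule card_insert_le_m1) auto
  ultimately show False by simp
qed

end

lemma final: "L = 12 \<and> W (p+9) = W (p+3)"
proof -
  obtain t where "W (p+t) = W (p+3) \<and> 9 \<le> t \<and> t \<le> L - 3 \<and> t mod 3 = 0" using get_t by (rule exE)
  hence tt: "W (p+t) = W (p+3)" "9 \<le> t" "t \<le> L - 3" "t mod 3 = 0" by simp_all
  have "L = 12" by (rule L12[OF tt])
  moreover have "t = L - 3" by (rule tL[OF tt])
  ultimately show ?thesis using tt by simp
qed


lemma occ1: assumes "W x = b" "W y = b" "x \<noteq> y" "x \<in> {lo..<lo+L}" "y \<in> {lo..<lo+L}"
  "A \<subseteq> {lo..<lo+L}" "x \<in> A" "y \<notin> A" shows "occ A b = 1"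
proof -
  have "occ A b = card ({x,y} \<inter> A)" by (rule occ_sub[OF assms(1-6)])
  also have "{x,y} \<inter> A = {x}" using assms(7,8) by auto
  finally show ?thesis by simp
qed

lemma K33_word: "\<exists>h. bij_betw h (set w) {0..<6} \<and> (\<forall>x\<in>set w. \<forall>y\<in>set w. interlaced w x y \<longleftrightarrow> K33_E (h x) (h y))"
proof -
  have L12: "L = 12" and W9: "W (p+9) = W (p+3)" using final by auto
  define Y where "Y = W p"
  define Z where "Z = W (p+3)"
  define A0 where "A0 = W (p+2)"
  define A1 where "A1 = W (p+1)"
  define A2 where "A2 = W (p+4)"
  define A3 where "A3 = W (p+7)"
  have c0: "(p+1 - k) mod 3 = 0" "(p+4 - k) mod 3 = 0" "(p+7 - k) mod 3 = 0" "(p+10 - k) mod 3 = 0"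
    using pc by presburger+
  have w5: "W (p+5) = A1" using fam0[OF c0(1)] by (simp add: A1_def add.assoc)
  have w8: "W (p+8) = A2" using fam0[OF c0(2)] by (simp add: A2_def add.assoc)
  have w11: "W (p+11) = A3" using fam0[OF c0(3)] by (simp add: A3_def add.assoc)
  have w10: "W (p+10) = A0"
  proof -
    have "W (p+10+4) = W (p+10)" by (rule fam0[OF c0(4)])
    moreover have "W (p+10+4) = W (p+2)" using W_perL[of "p+2"] L12 by (simp add: algebra_simps)
    ultimately show ?thesis by (simp add: A0_def)
  qed
  have w0: "W p = Y" "W (p+6) = Y" "W (p+3) = Z" "W (p+9) = Z" "W (p+2) = A0" "W (p+1) = A1"
    "W (p+4) = A2" "W (p+7) = A3"
    using p6 W9 by (auto simp: Y_def Z_def A0_def A1_def A2_def A3_def)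
  note vals = w0 w5 w8 w10 w11
  have win: "\<And>e. 0 \<le> e \<Longrightarrow> e < 12 \<Longrightarrow> p + e \<in> {p..<p+L}" using L12 by auto
  have dst: "\<And>a1 a2 b1 X1 X2. W (p+a1) = X1 \<Longrightarrow> W (p+a2) = X1 \<Longrightarrow> W (p+b1) = X2 \<Longrightarrow>
     0 \<le> a1 \<Longrightarrow> a1 < 12 \<Longrightarrow> 0 \<le> a2 \<Longrightarrow> a2 < 12 \<Longrightarrow> 0 \<le> b1 \<Longrightarrow> b1 < 12 \<Longrightarrow>
     a1 \<noteq> a2 \<Longrightarrow> a1 \<noteq> b1 \<Longrightarrow> a2 \<noteq> b1 \<Longrightarrow> X1 \<noteq> X2"
  proof
    fix a1 a2 b1 X1 X2
    assume h: "W (p+a1) = X1" "W (p+a2) = X1" "W (p+b1) = X2" "0 \<le> a1" "a1 < 12" "0 \<le> a2" "a2 < 12"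
      "0 \<le> b1" "b1 < 12" "a1 \<noteq> a2" "a1 \<noteq> b1" "a2 \<noteq> b1" "X1 = X2"
    show False by (rule three_d[of "p+a1" "p+a2" "p+b1"]) (use h L12 in auto)
  qed
  have YZ: "Y \<noteq> Z" by (rule dst[of 0 _ 6 3]) (use vals in auto)
  have YA0: "Y \<noteq> A0" by (rule dst[of 0 _ 6 2]) (use vals in auto)
  have YA1: "Y \<noteq> A1" by (rule dst[of 0 _ 6 1]) (use vals in auto)
  have YA2: "Y \<noteq> A2" by (rule dst[of 0 _ 6 4]) (use vals in auto)
  have YA3: "Y \<noteq> A3" by (rule dst[of 0 _ 6 7]) (use vals in auto)
  have ZA0: "Z \<noteq> A0" by (rule dst[of 3 _ 9 2]) (use vals in auto)
  have ZA1: "Z \<noteq> A1" by (rule dst[of 3 _ 9 1]) (use vals in auto)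
  have ZA2: "Z \<noteq> A2" by (rule dst[of 3 _ 9 4]) (use vals in auto)
  have ZA3: "Z \<noteq> A3" by (rule dst[of 3 _ 9 7]) (use vals in auto)
  have A01: "A0 \<noteq> A1" by (rule dst[of 2 _ 10 1]) (use vals in auto)
  have A02: "A0 \<noteq> A2" by (rule dst[of 2 _ 10 4]) (use vals in auto)
  have A03: "A0 \<noteq> A3" by (rule dst[of 2 _ 10 7]) (use vals in auto)
  have A12: "A1 \<noteq> A2" by (rule dst[of 1 _ 5 4]) (use vals in auto)
  have A13: "A1 \<noteq> A3" by (rule dst[of 1 _ 5 7]) (use vals in auto)
  have A23: "A2 \<noteq> A3" by (rule dst[of 4 _ 8 7]) (use vals in auto)
  note dist = YZ YA0 YA1 YA2 YA3 ZA0 ZA1 ZA2 ZA3 A01 A02 A03 A12 A13 A23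
  have sw: "set w = {Y, Z, A0, A1, A2, A3}"
  proof
    show "set w \<subseteq> {Y, Z, A0, A1, A2, A3}"
    proof
      fix b assume b: "b \<in> set w"
      have "occ {p..<p+L} b = 2" by (rule occ_window[OF b])
      hence "occ {p..<p+L} b \<ge> 1" by simp
      then obtain x where x: "x \<in> {p..<p+L}" "W x = b" by (rule occ_ex)
      have "x = p \<or> x = p+1 \<or> x = p+2 \<or> x = p+3 \<or> x = p+4 \<or> x = p+5 \<or> x = p+6 \<or> x = p+7 \<or>
        x = p+8 \<or> x = p+9 \<or> x = p+10 \<or> x = p+11"
      proof -
        have xb: "p \<le> x" "x < p + 12" using x L12 by auto
        thus ?thesis by presburger
      qed
      thus "b \<in> {Y, Z, A0, A1, A2, A3}" using x vals by auto
    qed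
  next
    show "{Y, Z, A0, A1, A2, A3} \<subseteq> set w" using W_in by (auto simp: Y_def Z_def A0_def A1_def A2_def A3_def)
  qed
  have inS: "Y \<in> set w" "Z \<in> set w" "A0 \<in> set w" "A1 \<in> set w" "A2 \<in> set w" "A3 \<in> set w" using sw by auto
  have chY: "W (p+6) = W p" "(0::int) < 6" "6 < L" using p6 L12 by auto
  have chA1: "W ((p+1)+4) = W (p+1)" "(0::int) < 4" "4 < L" using w5 L12 by (auto simp: A1_def add.assoc)
  have chA3: "W ((p+7)+4) = W (p+7)" "(0::int) < 4" "4 < L" using w11 L12 by (auto simp: A3_def add.assoc)
  have o1: "\<And>x y b A. W x = b \<Longrightarrow> W y = b \<Longrightarrow> x \<in> {p..<p+12} \<Longrightarrow> y \<in> {p..<p+12} \<Longrightarrow>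
       A \<subseteq> {p..<p+12} \<Longrightarrow> x \<in> A \<Longrightarrow> y \<notin> A \<Longrightarrow> occ A b = 1"
    using occ1 L12 by fastforce
  have crY: "\<And>b. b \<in> set w \<Longrightarrow> b \<noteq> W p \<Longrightarrow> occ {p+1..<p+6} b = 1 \<Longrightarrow> interlaced w (W p) b"
  proof -
    fix b assume h: "b \<in> set w" "b \<noteq> W p" "occ {p+1..<p+6} b = 1"
    show "interlaced w (W p) b" using cross[OF chY h(1) h(2)] h(3) by simp
  qed
  have crA1: "\<And>b. b \<in> set w \<Longrightarrow> b \<noteq> W (p+1) \<Longrightarrow> occ {(p+1)+1..<(p+1)+4} b = 1 \<Longrightarrow> interlaced w (W (p+1)) b"
  proof -
    fix b assume h: "b \<in> set w" "b \<noteq> W (p+1)" "occ {(p+1)+1..<(p+1)+4} b = 1"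
    show "interlaced w (W (p+1)) b" using cross[OF chA1 h(1) h(2)] h(3) by simp
  qed
  have crA3: "\<And>b. b \<in> set w \<Longrightarrow> b \<noteq> W (p+7) \<Longrightarrow> occ {(p+7)+1..<(p+7)+4} b = 1 \<Longrightarrow> interlaced w (W (p+7)) b"
  proof -
    fix b assume h: "b \<in> set w" "b \<noteq> W (p+7)" "occ {(p+7)+1..<(p+7)+4} b = 1"
    show "interlaced w (W (p+7)) b" using cross[OF chA3 h(1) h(2)] h(3) by simp
  qed
  have "occ {p+1..<p+6} A0 = 1" by (rule o1[of "p+2" _ "p+10"]) (use vals in auto)
  hence iY1: "interlaced w Y A0" using crY[of A0] inS YA0 by (simp add: Y_def)
  have "occ {p+1..<p+6} Z = 1" by (rule o1[of "p+3" _ "p+9"]) (use vals in auto)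
  hence iY2: "interlaced w Y Z" using crY[of Z] inS YZ by (simp add: Y_def)
  have "occ {p+1..<p+6} A2 = 1" by (rule o1[of "p+4" _ "p+8"]) (use vals in auto)
  hence iY3: "interlaced w Y A2" using crY[of A2] inS YA2 by (simp add: Y_def)
  have "occ {(p+1)+1..<(p+1)+4} A0 = 1" by (rule o1[of "p+2" _ "p+10"]) (use vals in auto)
  hence iA11: "interlaced w A1 A0" using crA1[of A0] inS A01[symmetric] by (simp add: A1_def)
  have "occ {(p+1)+1..<(p+1)+4} Z = 1" by (rule o1[of "p+3" _ "p+9"]) (use vals in auto)
  hence iA12: "interlaced w A1 Z" using crA1[of Z] inS ZA1[symmetric] by (simp add: A1_def)
  have "occ {(p+1)+1..<(p+1)+4} A2 = 1" by (rule o1[of "p+4" _ "p+8"]) (use vals in auto)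
  hence iA13: "interlaced w A1 A2" using crA1[of A2] inS A12 by (simp add: A1_def)
  have "occ {(p+7)+1..<(p+7)+4} A0 = 1" by (rule o1[of "p+10" _ "p+2"]) (use vals in auto)
  hence iA31: "interlaced w A3 A0" using crA3[of A0] inS A03[symmetric] by (simp add: A3_def)
  have "occ {(p+7)+1..<(p+7)+4} Z = 1" by (rule o1[of "p+9" _ "p+3"]) (use vals in auto)
  hence iA32: "interlaced w A3 Z" using crA3[of Z] inS ZA3[symmetric] by (simp add: A3_def)
  have "occ {(p+7)+1..<(p+7)+4} A2 = 1" by (rule o1[of "p+8" _ "p+4"]) (use vals in auto)
  hence iA33: "interlaced w A3 A2" using crA3[of A2] inS A23[symmetric] by (simp add: A3_def)
  note iY = iY1 iY2 iY3 and iA1 = iA11 iA12 iA13 and iA3 = iA31 iA32 iA33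
  have crs: "\<And>x S. x \<in> set w \<Longrightarrow> S \<subseteq> {b\<in>set w. interlaced w x b} \<Longrightarrow> card S = 3 \<Longrightarrow> {b\<in>set w. interlaced w x b} = S"
  proof -
    fix x S assume h: "x \<in> set w" "S \<subseteq> {b\<in>set w. interlaced w x b}" "card S = 3"
    have c: "card {b\<in>set w. interlaced w x b} = 3" using deg3 h by blast
    show "{b\<in>set w. interlaced w x b} = S" using card_subset_eq[OF _ h(2)] c h(3) by simp
  qed
  have c1: "card {A0, Z, A2} = 3" using dist by auto
  have c2: "card {Y, A1, A3} = 3" using dist by auto
  have side0: "\<And>x. x \<in> {Y, A1, A3} \<Longrightarrow> {b\<in>set w. interlaced w x b} = {A0, Z, A2}"
  proof -
    fix x assume x: "x \<in> {Y, A1, A3}"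
    have xs: "x \<in> set w" using x inS by auto
    have "{A0, Z, A2} \<subseteq> {b\<in>set w. interlaced w x b}"
      using x inS iY iA1 iA3 by auto
    thus "{b\<in>set w. interlaced w x b} = {A0, Z, A2}" by (rule crs[OF xs _ c1])
  qed
  have jY: "interlaced w A0 Y" "interlaced w Z Y" "interlaced w A2 Y"
    using iY inter_sym[of Y] by simp_all
  have jA1: "interlaced w A0 A1" "interlaced w Z A1" "interlaced w A2 A1"
    using iA1 inter_sym[of A1] by simp_all
  have jA3: "interlaced w A0 A3" "interlaced w Z A3" "interlaced w A2 A3"
    using iA3 inter_sym[of A3] by simp_all
  have side1: "\<And>x. x \<in> {A0, Z, A2} \<Longrightarrow> {b\<in>set w. interlaced w x b} = {Y, A1, A3}"
  proof -
    fix x assume x: "x \<in> {A0, Z, A2}"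
    have xs: "x \<in> set w" using x inS by auto
    have "{Y, A1, A3} \<subseteq> {b\<in>set w. interlaced w x b}"
      using x inS jY jA1 jA3 by auto
    thus "{b\<in>set w. interlaced w x b} = {Y, A1, A3}" by (rule crs[OF xs _ c2])
  qed
  define h where "h = (\<lambda>x. if x = Y then 0 else if x = A1 then 1 else if x = A3 then 2 else
     if x = Z then 3 else if x = A0 then (4::nat) else 5)"
  have hv: "h Y = 0" "h A1 = 1" "h A3 = 2" "h Z = 3" "h A0 = 4" "h A2 = 5"
    using dist by (auto simp: h_def)
  have bij: "bij_betw h (set w) {0..<6}"
  proof (rule bij_betw_imageI)
    show "inj_on h (set w)" unfolding sw by (rule inj_onI) (use hv in auto)
  next
    show "h ` set w = {0..<6}" unfolding sw using hv by auto
  qed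
  have hs: "\<And>y. y \<in> set w \<Longrightarrow> (h y < 3 \<longleftrightarrow> y \<in> {Y, A1, A3})"
  proof -
    fix y assume "y \<in> set w"
    hence "y = Y \<or> y = Z \<or> y = A0 \<or> y = A1 \<or> y = A2 \<or> y = A3" using sw by auto
    thus "h y < 3 \<longleftrightarrow> y \<in> {Y, A1, A3}" using hv dist by auto
  qed
  have s01: "\<And>y. y \<in> set w \<Longrightarrow> (y \<in> {Y, A1, A3} \<longleftrightarrow> y \<notin> {A0, Z, A2})"
  proof -
    fix y assume "y \<in> set w"
    hence "y = Y \<or> y = Z \<or> y = A0 \<or> y = A1 \<or> y = A2 \<or> y = A3" using sw by auto
    thus "y \<in> {Y, A1, A3} \<longleftrightarrow> y \<notin> {A0, Z, A2}" using dist by auto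
  qed
  have "\<forall>x\<in>set w. \<forall>y\<in>set w. interlaced w x y \<longleftrightarrow> K33_E (h x) (h y)"
  proof (intro ballI)
    fix x y assume x: "x \<in> set w" and y: "y \<in> set w"
    have hx: "h x < 6" "h y < 6" using bij x y by (auto simp: bij_betw_def)
    have k: "K33_E (h x) (h y) \<longleftrightarrow> ((h x < 3) \<noteq> (h y < 3))" using hx by (simp add: K33_E_def K33_V_def)
    have iy: "interlaced w x y \<longleftrightarrow> y \<in> {b\<in>set w. interlaced w x b}" using y by simp
    show "interlaced w x y \<longleftrightarrow> K33_E (h x) (h y)"
    proof (cases "x \<in> {Y, A1, A3}")
      case True
      have "interlaced w x y \<longleftrightarrow> y \<in> {A0, Z, A2}" using iy side0[OF True] by simp
      moreover have "h x < 3" using hs[OF x] True by simp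
      moreover have "h y < 3 \<longleftrightarrow> y \<notin> {A0, Z, A2}" using hs[OF y] s01[OF y] by simp
      ultimately show ?thesis using k by simp
    next
      case False
      hence F: "x \<in> {A0, Z, A2}" using s01[OF x] by simp
      have "interlaced w x y \<longleftrightarrow> y \<in> {Y, A1, A3}" using iy side1[OF F] by simp
      moreover have "\<not> h x < 3" using hs[OF x] False by simp
      moreover have "h y < 3 \<longleftrightarrow> y \<in> {Y, A1, A3}" using hs[OF y] by simp
      ultimately show ?thesis using k by simp
    qed
  qed
  thus ?thesis using bij by blast
qed


end

lemma K4_case:
  fixes V :: "'a set" and E
  assumes sg: "simple_graph V E" and rg: "regular 3 V E" and c4: "card V = 4"
  shows "graph_iso V E K4_V K4_E"
proof -
  have fin: "finite V" using sg by (simp add: simple_graph_def)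
  have adj: "E x y \<longleftrightarrow> x \<noteq> y" if x: "x \<in> V" and y: "y \<in> V" for x y
  proof -
    have sub: "{u\<in>V. E x u} \<subseteq> V - {x}" using sg by (auto simp: simple_graph_def)
    have "card (V - {x}) = 3" using c4 x fin by simp
    moreover have "card {u\<in>V. E x u} = 3" using rg x by (simp add: regular_def degree_def)
    ultimately have "{u\<in>V. E x u} = V - {x}" using card_subset_eq[OF _ sub] fin by simp
    thus ?thesis using y by blast
  qed
  have "\<exists>g. bij_betw g V K4_V" by (rule finite_same_card_bij[OF fin]) (auto simp: K4_V_def c4)
  then obtain g where g: "bij_betw g V K4_V" by blast
  have "\<forall>x\<in>V. \<forall>y\<in>V. E x y \<longleftrightarrow> K4_E (g x) (g y)"
  proof (intro ballI)
    fix x y assume x: "x \<in> V" and y: "y \<in> V"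
    have "g x \<in> K4_V" "g y \<in> K4_V" using g x y by (auto simp: bij_betw_def)
    moreover have "g x = g y \<longleftrightarrow> x = y" using g x y by (auto simp: bij_betw_def inj_on_def)
    ultimately show "E x y \<longleftrightarrow> K4_E (g x) (g y)" using adj[OF x y] by (simp add: K4_E_def)
  qed
  thus ?thesis using g unfolding graph_iso_def by blast
qed

theorem corollary4:
  fixes V :: "'a set" and E :: "'a \<Rightarrow> 'a \<Rightarrow> bool"
  assumes "simple_graph V E"
    and "regular 3 V E"
    and "circle_graph V E"
    and "\<not> graph_iso V E K4_V K4_E"
    and "\<not> graph_iso V E K33_V K33_E"
  shows "\<not> k_connected 3 V E"
proof
  assume kc: "k_connected 3 V E"
  have sg: "simple_graph V E" and rg: "regular 3 V E" using assms by auto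
  have fin: "finite V" using sg by (simp add: simple_graph_def)
  have cV: "card V > 3" using kc by (simp add: k_connected_def)
  obtain w :: "nat list" where dw: "double_occurrence_word w" and iso: "graph_iso V E (set w) (interlaced w)"
    using assms(3) by (auto simp: circle_graph_def)
  obtain f where f: "bij_betw f V (set w)" and fE: "\<forall>x\<in>V. \<forall>y\<in>V. E x y \<longleftrightarrow> interlaced w (f x) (f y)"
    using iso by (auto simp: graph_iso_def)
  have cw: "card (set w) = card V" using bij_betw_same_card[OF f] by simp
  have "card V \<noteq> 4" using K4_case[OF sg rg] assms(4) by blast
  hence cV5: "card V \<ge> 5" using cV by simp
  have wne: "w \<noteq> []" using cw cV5 by auto
  interpret dw w by unfold_locales (use dw wne in auto)
  have len: "length w = 2 * card (set w)"
  proof -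
    have "sum (count_list w) (set w) = length w" by (rule sum_count_set) auto
    moreover have "sum (count_list w) (set w) = sum (\<lambda>_. 2) (set w)"
      by (rule sum.cong) (use dw in \<open>auto simp: double_occurrence_word_def\<close>)
    ultimately show ?thesis by simp
  qed
  have L10: "L \<ge> 10" using len cw cV5 by (simp add: L_def)
  have fimg: "f ` V = set w" using f by (simp add: bij_betw_def)
  have finj: "inj_on f V" using f by (simp add: bij_betw_def)
  have deg3: "\<forall>a\<in>set w. card {b\<in>set w. interlaced w a b} = 3"
  proof
    fix a assume a: "a \<in> set w"
    then obtain v where v: "v \<in> V" "a = f v" using fimg by auto
    have "{b\<in>set w. interlaced w a b} = f ` {u\<in>V. E v u}"
    proof
      show "{b\<in>set w. interlaced w a b} \<subseteq> f ` {u\<in>V. E v u}"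
      proof
        fix x assume x: "x \<in> {b\<in>set w. interlaced w a b}"
        then obtain u where u: "u \<in> V" "x = f u" using fimg by auto
        hence "E v u" using fE v x by auto
        thus "x \<in> f ` {u\<in>V. E v u}" using u by auto
      qed
    next
      show "f ` {u\<in>V. E v u} \<subseteq> {b\<in>set w. interlaced w a b}" using v fE fimg by auto
    qed
    moreover have "card (f ` {u\<in>V. E v u}) = card {u\<in>V. E v u}"
      by (rule card_image) (rule inj_on_subset[OF finj], auto)
    moreover have "card {u\<in>V. E v u} = 3" using rg v by (simp add: regular_def degree_def)
    ultimately show "card {b\<in>set w. interlaced w a b} = 3" by simp
  qed
  have nocut: "card {b\<in>set w. occ {lo..<hi} b = 1} \<ge> 3"
    if hl: "hi - lo \<le> L" and e0: "\<exists>b\<in>set w. occ {lo..<hi} b = 0" and e2: "\<exists>b\<in>set w. occ {lo..<hi} b = 2" for lo hi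
  proof (rule ccontr)
    assume "\<not> card {b\<in>set w. occ {lo..<hi} b = 1} \<ge> 3"
    hence cX: "card {b\<in>set w. occ {lo..<hi} b = 1} < 3" by simp
    define X where "X = {v\<in>V. occ {lo..<hi} (f v) = 1}"
    have "f ` X = {b\<in>set w. occ {lo..<hi} b = 1}" using fimg by (auto simp: X_def)
    moreover have "card (f ` X) = card X" by (rule card_image) (rule inj_on_subset[OF finj], auto simp: X_def)
    ultimately have "card X < 3" using cX by simp
    moreover have "X \<subseteq> V" by (auto simp: X_def)
    ultimately have con: "connected_on E (V - X)" using kc by (simp add: k_connected_def)
    obtain b0 where b0: "b0 \<in> set w" "occ {lo..<hi} b0 = 0" using e0 by blast
    obtain b2 where b2: "b2 \<in> set w" "occ {lo..<hi} b2 = 2" using e2 by blast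
    obtain v0 where v0: "v0 \<in> V" "f v0 = b0" using b0 fimg by force
    obtain v2 where v2: "v2 \<in> V" "f v2 = b2" using b2 fimg by force
    have inS: "v0 \<in> V - X" "v2 \<in> V - X" using v0 v2 b0 b2 by (auto simp: X_def)
    have path: "(\<lambda>u v. u \<in> V - X \<and> v \<in> V - X \<and> E u v)\<^sup>*\<^sup>* v0 v2"
      using con inS unfolding connected_on_def by blast
    have inv: "occ {lo..<hi} (f v) = 0"
      if "(\<lambda>u v. u \<in> V - X \<and> v \<in> V - X \<and> E u v)\<^sup>*\<^sup>* v0 v" for v
      using that
    proof (induction rule: rtranclp_induct)
      case base thus ?case using v0 b0 by simp
    next
      case (step u v)
      have uv: "u \<in> V" "v \<in> V" "v \<notin> X" "E u v" using step.hyps(2) by auto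
      have i: "interlaced w (f u) (f v)" using fE uv by blast
      have fv: "f v \<in> set w" "f u \<in> set w" using uv fimg by auto
      have "occ {lo..<hi} (f v) \<noteq> 1" using uv by (auto simp: X_def)
      moreover have "occ {lo..<hi} (f v) \<le> 2" by (rule occ_le2[where lo=lo]) (use hl in auto)
      moreover have "occ {lo..<hi} (f v) \<noteq> 2"
      proof
        assume o2: "occ {lo..<hi} (f v) = 2"
        have "\<not> interlaced w (f v) (f u)" by (rule seg[OF hl step.IH o2 fv(2)])
        thus False using i inter_sym by blast
      qed
      ultimately show ?case by simp
    qed
    have "occ {lo..<hi} (f v2) = 0" by (rule inv[OF path])
    thus False using v2 b2 by simp
  qed
  interpret cw w by unfold_locales (use deg3 nocut L10 in auto)
  obtain k where k: "W (k+4) = W k" using first by blast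
  interpret cwk w k by unfold_locales (rule k)
  obtain p where p: "(p - k) mod 3 = 2" "W (p+6) = W p" using six by blast
  interpret cwkp w k p by unfold_locales (use p in auto)
  obtain h where h: "bij_betw h (set w) {0..<6}" "\<forall>x\<in>set w. \<forall>y\<in>set w. interlaced w x y \<longleftrightarrow> K33_E (h x) (h y)"
    using K33_word by blast
  have "bij_betw (h \<circ> f) V K33_V" using bij_betw_trans[OF f h(1)] by (simp add: K33_V_def)
  moreover have "\<forall>x\<in>V. \<forall>y\<in>V. E x y \<longleftrightarrow> K33_E ((h \<circ> f) x) ((h \<circ> f) y)"
  proof (intro ballI)
    fix x y assume x: "x \<in> V" and y: "y \<in> V"
    have "f x \<in> set w" "f y \<in> set w" using x y fimg by auto
    hence "interlaced w (f x) (f y) \<longleftrightarrow> K33_E (h (f x)) (h (f y))" using h(2) by blast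
    thus "E x y \<longleftrightarrow> K33_E ((h \<circ> f) x) ((h \<circ> f) y)" using fE x y by simp
  qed
  ultimately have "graph_iso V E K33_V K33_E" unfolding graph_iso_def by blast
  thus False using assms(5) by blast
qed

end
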